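(* Let $f:\mathbb{R}^{m\times n}\to\mathbb{R}$ be $L$-smooth, i.e. $f({\bm X})\le f({\bm Y})+\langle\nabla f({\bm Y}),{\bm X}-{\bm Y}\rangle+\frac L2\|{\bm X}-{\bm Y}\|_F^2$ for all ${\bm X},{\bm Y}$, and let $f_*:=\inf_{{\bm X}}f({\bm X})>-\infty$. Let $d=\min\{m,n\}$, $\alpha\in(1,2]$, $\sigma>0$, and consider the iteration ${\bm X}_{k+1}={\bm X}_k-\eta\,\mathcal{C}_\tau({\bm G}_k)$, $k=0,1,\dots$, where $\mathbb{E}[{\bm G}_k\mid{\bm X}_k]=\nabla f({\bm X}_k)$ and $\mathbb{E}[\|{\bm G}_k-\nabla f({\bm X}_k)\|_F^\alpha\mid{\bm X}_k]\le\sigma^\alpha$. Suppose the constant step size satisfies $\eta\le\frac{1}{4dL}$ and the threshold satisfies $\tau\ge\max\{2,8\sigma\}$. Then for every $K\ge1$, $$\min_{0\le k\le K-1}\mathbb{E}\big[\phi(\|\nabla f({\bm X}_k)\|_F)\big]\le\frac{4(f({\bm X}_0)-f_* )}{\eta K}+32\,\tau^{-2(\alpha-1)}\sigma^{2\alpha}+8\eta dL\,\tau^{2-\alpha}\sigma^\alpha,$$ where $\phi(t):=\min\{t,t^2\}$.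
   Context: $\|\cdot\|_F$ is the Frobenius norm and $\langle\cdot,\cdot\rangle$ the Frobenius inner product. Spectral clipping: for ${\bm G}\in\mathbb{R}^{m\times n}$ with (thin) SVD ${\bm G}={\bm U}\,\mathrm{diag}(\sigma_1,\dots,\sigma_d){\bm V}^\top$, $d=\min\{m,n\}$, and threshold $\tau>0$, define $\mathcal{C}_\tau({\bm G}):={\bm U}\,\mathrm{diag}(\min\{\sigma_1,\tau\},\dots,\min\{\sigma_d,\tau\}){\bm V}^\top$. *)

theory Defs
  imports "HOL-Analysis.Analysis" "HOL-Probability.Probability"
begin

text \<open>Matrices in R^(m x n) are modelled as real^'n^'m. On this type the library inner
product is the Frobenius inner product and the library norm is the Frobenius norm.\<close>

definition outer :: "real^'m \<Rightarrow> real^'n \<Rightarrow> real^'n^'m" where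
  "outer u v = (\<chi> i j. u $ i * v $ j)"

definition is_thin_svd :: "real^'n::finite^'m::finite \<Rightarrow> (nat \<Rightarrow> real) \<Rightarrow> (nat \<Rightarrow> real^'m) \<Rightarrow> (nat \<Rightarrow> real^'n) \<Rightarrow> bool" where
  "is_thin_svd G s u v \<longleftrightarrow>
     (let d = min CARD('m) CARD('n) in
       (\<forall>i<d. 0 \<le> s i) \<and>
       (\<forall>i<d. \<forall>j<d. u i \<bullet> u j = (if i = j then 1 else 0)) \<and>
       (\<forall>i<d. \<forall>j<d. v i \<bullet> v j = (if i = j then 1 else 0)) \<and>
       G = (\<Sum>i<d. s i *\<^sub>R outer (u i) (v i)))"

definition spec_clip :: "real \<Rightarrow> real^'n::finite^'m::finite \<Rightarrow> real^'n^'m" where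
  "spec_clip \<tau> G = (SOME C. \<exists>s u v. is_thin_svd G s u v \<and>
      C = (\<Sum>i<min CARD('m) CARD('n). min (s i) \<tau> *\<^sub>R outer (u i) (v i)))"

definition phi :: "real \<Rightarrow> real" where
  "phi t = min t (t\<^sup>2)"

end

theory Submission
  imports Defs
begin


lemma outer_inner: "outer a b \<bullet> Y = a \<bullet> (Y *v b)"
  unfolding outer_def inner_vec_def matrix_vector_mult_def
  by (simp add: sum_distrib_left mult_ac)

lemma outer_mv: "outer c e *v b = (e \<bullet> b) *\<^sub>R c"
  unfolding outer_def inner_vec_def matrix_vector_mult_def
  by (simp add: vec_eq_iff sum_distrib_left sum_distrib_right mult.commute mult.left_commute)

lemma outer_outer: "outer a b \<bullet> outer c e = (a \<bullet> c) * (b \<bullet> e)"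
  by (simp add: outer_inner outer_mv inner_commute)

lemma mv_transpose: "u \<bullet> ((Y::real^'n^'m) *v v) = (transpose Y *v u) \<bullet> v"
  by (simp add: dot_lmul_matrix)

lemma norm_mv_le: "norm ((Y::real^'n^'m) *v v) \<le> norm Y * norm v"
proof -
  have "norm (Y *v v) ^ 2 = (\<Sum>i\<in>UNIV. (Y$i \<bullet> v)^2)"
    unfolding matrix_vector_mult_def
    by (simp add: norm_vec_def L2_set_def inner_vec_def real_sqrt_pow2 sum_nonneg)
  also have "\<dots> \<le> (\<Sum>i\<in>UNIV. (norm (Y$i))^2 * (norm v)^2)"
    apply (rule sum_mono)
    by (metis Cauchy_Schwarz_ineq power2_norm_eq_inner)
  also have "\<dots> = (norm Y * norm v)^2"
    by (simp add: norm_vec_def L2_set_def real_sqrt_pow2 sum_nonneg power_mult_distrib sum_distrib_right)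
  finally show ?thesis
    by (rule power2_le_imp_le) simp
qed

lemma smv: "(c *\<^sub>R (A::real^'n^'m)) *v w = c *\<^sub>R (A *v w)"
  by (simp add: matrix_vector_mult_def vec_eq_iff sum_distrib_left mult.assoc)

lemma rank1_mv: "(R - c *\<^sub>R outer x y) *v z = R *v z - (c * (y \<bullet> z)) *\<^sub>R x"
  by (simp only: matrix_vector_mult_diff_rdistrib smv outer_mv scaleR_scaleR)


definition orthon :: "(nat \<Rightarrow> 'a::real_inner) \<Rightarrow> nat \<Rightarrow> bool" where
  "orthon u j \<longleftrightarrow> (\<forall>i<j. \<forall>l<j. u i \<bullet> u l = (if i = l then 1 else 0))"

lemma nd2: "norm (a - b)^2 = norm a^2 - 2 * (a \<bullet> b) + norm (b::'a::real_inner)^2"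
  by (simp add: power2_norm_eq_inner inner_diff_left inner_diff_right inner_commute)

lemma exists_unit_orth:
  fixes u :: "nat \<Rightarrow> real^'m"
  assumes "j < CARD('m)"
  shows "\<exists>x. norm x = 1 \<and> (\<forall>i<j. x \<bullet> u i = 0)"
proof -
  have "dim (u ` {..<j}) \<le> card (u ` {..<j})"
    by (rule dim_le_card) (auto intro: span_base)
  also have "\<dots> \<le> j" using card_image_le[of "{..<j}" u] by simp
  finally have dimlt: "dim (u ` {..<j}) < DIM(real^'m)" using assms by simp
  obtain x where x: "x \<noteq> 0" "\<And>y. y \<in> span (u ` {..<j}) \<Longrightarrow> orthogonal x y"
    using orthogonal_to_subspace_exists[OF dimlt] by blast
  show ?thesis
  proof (intro exI conjI allI impI)
    show "norm (x /\<^sub>R norm x) = 1" using x by simp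
    fix i assume "i < j"
    then have "orthogonal x (u i)" by (intro x(2) span_base) auto
    then show "(x /\<^sub>R norm x) \<bullet> u i = 0" by (simp add: orthogonal_def)
  qed
qed

lemma svd_step:
  fixes R :: "real^'n^'m" and u :: "nat \<Rightarrow> real^'m" and v :: "nat \<Rightarrow> real^'n"
  assumes jm: "j < CARD('m)" and jn: "j < CARD('n)"
    and Rv: "\<And>i. i < j \<Longrightarrow> R *v v i = 0"
    and Ru: "\<And>i y. i < j \<Longrightarrow> u i \<bullet> (R *v y) = 0"
  shows "\<exists>s x y. 0 \<le> s \<and> norm x = 1 \<and> norm y = 1 \<and> (\<forall>i<j. x \<bullet> u i = 0 \<and> y \<bullet> v i = 0)
     \<and> R *v y = s *\<^sub>R x \<and> (\<forall>z. x \<bullet> (R *v z) = s * (y \<bullet> z))"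
proof -
  define S where "S = {p :: (real^'m) \<times> (real^'n). norm (fst p) = 1 \<and> norm (snd p) = 1 \<and>
      (\<forall>i<j. fst p \<bullet> u i = 0) \<and> (\<forall>i<j. snd p \<bullet> v i = 0)}"
  define F where "F = (\<lambda>p :: (real^'m) \<times> (real^'n). fst p \<bullet> (R *v snd p))"
  have "S = {p. norm (fst p) = 1} \<inter> {p. norm (snd p) = 1} \<inter> (\<Inter>i\<in>{..<j}. {p. fst p \<bullet> u i = 0})
            \<inter> (\<Inter>i\<in>{..<j}. {p. snd p \<bullet> v i = 0})"
    unfolding S_def by auto
  moreover have "closed \<dots>"
    by (intro closed_Int closed_INT ballI closed_Collect_eq continuous_intros)
  ultimately have clS: "closed S" by simp
  have "S \<subseteq> cball 0 2"
  proof
    fix p assume "p \<in> S"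
    then have "norm p \<le> norm (fst p) + norm (snd p)" "norm (fst p) = 1" "norm (snd p) = 1"
      unfolding S_def using norm_Pair_le[of "fst p" "snd p"] by auto
    then show "p \<in> cball 0 2" by simp
  qed
  then have bS: "bounded S" using bounded_cball bounded_subset by blast
  have cS: "compact S" using clS bS compact_eq_bounded_closed by blast
  obtain x0 where x0: "norm x0 = 1" "\<forall>i<j. x0 \<bullet> u i = 0" using exists_unit_orth[OF jm] by blast
  obtain y0 where y0: "norm y0 = 1" "\<forall>i<j. y0 \<bullet> v i = 0" using exists_unit_orth[OF jn] by blast
  have "(x0, y0) \<in> S" using x0 y0 unfolding S_def by simp
  then have neS: "S \<noteq> {}" by blast
  have coF: "continuous_on S F" unfolding F_def
    by (intro continuous_intros continuous_on_compose2[OF bounded_linear.continuous_on[OF matrix_vector_mul_bounded_linear]]) auto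
  obtain p where pS: "p \<in> S" and pmax: "\<And>q. q \<in> S \<Longrightarrow> F q \<le> F p"
    using continuous_attains_sup[OF cS neS coF] by blast
  define x where "x = fst p"
  define y where "y = snd p"
  define s where "s = F p"
  have x: "norm x = 1" "\<forall>i<j. x \<bullet> u i = 0" and y: "norm y = 1" "\<forall>i<j. y \<bullet> v i = 0"
    using pS unfolding S_def x_def y_def by auto
  have s: "s = x \<bullet> (R *v y)" unfolding s_def F_def x_def y_def by simp
  have "(-x, y) \<in> S" using x y unfolding S_def by simp
  from pmax[OF this] have "- s \<le> s" unfolding s_def F_def x_def y_def by simp
  then have s0: "0 \<le> s" by simp
  have bnd1: "norm (R *v z) \<le> s" if z: "norm z = 1" "\<forall>i<j. z \<bullet> v i = 0" for z
  proof (cases "R *v z = 0")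
    case True then show ?thesis using s0 by simp
  next
    case False
    define w where "w = (R *v z) /\<^sub>R norm (R *v z)"
    have "(w, z) \<in> S" unfolding S_def w_def using False z Ru by (auto simp: inner_commute)
    from pmax[OF this] have "F (w, z) \<le> s" unfolding s_def .
    moreover have "F (w, z) = norm (R *v z)" unfolding F_def w_def using False
      by (simp add: power2_norm_eq_inner[symmetric] power2_eq_square)
    ultimately show ?thesis by simp
  qed
  have bnd2: "norm (transpose R *v w) \<le> s" if w: "norm w = 1" "\<forall>i<j. w \<bullet> u i = 0" for w
  proof (cases "transpose R *v w = 0")
    case True then show ?thesis using s0 by simp
  next
    case False
    define z where "z = (transpose R *v w) /\<^sub>R norm (transpose R *v w)"
    have "z \<bullet> v i = 0" if "i < j" for i
      using Rv[OF that] mv_transpose[of w R "v i"] unfolding z_def by simp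
    then have "(w, z) \<in> S" unfolding S_def z_def using False w by auto
    from pmax[OF this] have "F (w, z) \<le> s" unfolding s_def .
    moreover have "F (w, z) = norm (transpose R *v w)" unfolding F_def z_def using False
      by (simp add: mv_transpose power2_norm_eq_inner[symmetric] power2_eq_square)
    ultimately show ?thesis by simp
  qed
  have "norm (R *v y - s *\<^sub>R x) ^ 2 = norm (R *v y) ^ 2 - 2 * s * (x \<bullet> (R *v y)) + s^2 * (norm x)^2"
    by (simp add: nd2 power_mult_distrib inner_commute)
  also have "\<dots> \<le> 0" using bnd1[OF y] s x s0
    by (simp add: power2_eq_square mult_mono)
  finally have e1: "R *v y = s *\<^sub>R x" by simp
  have "norm (transpose R *v x - s *\<^sub>R y) ^ 2 = norm (transpose R *v x) ^ 2 - 2 * s * ((transpose R *v x) \<bullet> y) + s^2 * (norm y)^2"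
    by (simp add: nd2 power_mult_distrib inner_commute)
  also have "\<dots> \<le> 0" using bnd2[OF x] s y s0 mv_transpose[of x R y]
    by (simp add: power2_eq_square mult_mono)
  finally have e2: "transpose R *v x = s *\<^sub>R y" by simp
  have "\<forall>z. x \<bullet> (R *v z) = s * (y \<bullet> z)"
    using e2 by (simp add: mv_transpose)
  then show ?thesis using s0 x y e1 by blast
qed

lemma svd_partial:
  fixes G :: "real^'n^'m"
  shows "j \<le> min CARD('m) CARD('n) \<Longrightarrow> \<exists>s u v. (\<forall>i<j. 0 \<le> s i) \<and> orthon u j \<and> orthon v j \<and>
     (\<forall>i<j. (G - (\<Sum>l<j. s l *\<^sub>R outer (u l) (v l))) *v v i = 0) \<and>
     (\<forall>i<j. \<forall>z. u i \<bullet> ((G - (\<Sum>l<j. s l *\<^sub>R outer (u l) (v l))) *v z) = 0)"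
proof (induction j)
  case 0
  then show ?case by (simp add: orthon_def)
next
  case (Suc j)
  have "j \<le> min CARD('m) CARD('n)" using Suc.prems by simp
  then have "\<exists>s u v. (\<forall>i<j. 0 \<le> s i) \<and> orthon u j \<and> orthon v j \<and>
     (\<forall>i<j. (G - (\<Sum>l<j. s l *\<^sub>R outer (u l) (v l))) *v v i = 0) \<and>
     (\<forall>i<j. \<forall>z. u i \<bullet> ((G - (\<Sum>l<j. s l *\<^sub>R outer (u l) (v l))) *v z) = 0)"
    by (rule Suc.IH)
  then obtain s u v where s: "\<forall>i<j. 0 \<le> s i" and ou: "orthon u j" and ov: "orthon v j"
    and Rv: "\<forall>i<j. (G - (\<Sum>l<j. s l *\<^sub>R outer (u l) (v l))) *v v i = 0"
    and Ru: "\<forall>i<j. \<forall>z. u i \<bullet> ((G - (\<Sum>l<j. s l *\<^sub>R outer (u l) (v l))) *v z) = 0"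
    by (elim exE conjE) blast
  define R where "R = G - (\<Sum>l<j. s l *\<^sub>R outer (u l) (v l))"
  have RvR: "\<forall>i<j. R *v v i = 0" using Rv unfolding R_def .
  have RuR: "\<forall>i<j. \<forall>z. u i \<bullet> (R *v z) = 0" using Ru unfolding R_def .
  have "j < CARD('m)" "j < CARD('n)" using Suc.prems by auto
  then have ex: "\<exists>s x y. 0 \<le> s \<and> norm x = 1 \<and> norm y = 1 \<and> (\<forall>i<j. x \<bullet> u i = 0 \<and> y \<bullet> v i = 0)
     \<and> R *v y = s *\<^sub>R x \<and> (\<forall>z. x \<bullet> (R *v z) = s * (y \<bullet> z))"
    by (intro svd_step) (use RvR RuR in auto)
  then obtain s' x y where st: "0 \<le> s'" "norm x = 1" "norm y = 1" "\<forall>i<j. x \<bullet> u i = 0 \<and> y \<bullet> v i = 0"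
      "R *v y = s' *\<^sub>R x" "\<forall>z. x \<bullet> (R *v z) = s' * (y \<bullet> z)"
    by (elim exE conjE) blast
  have xx: "x \<bullet> x = 1" using st(2) by (simp add: norm_eq_1)
  have yy: "y \<bullet> y = 1" using st(3) by (simp add: norm_eq_1)
  define s2 where "s2 = s(j := s')"
  define u2 where "u2 = u(j := x)"
  define v2 where "v2 = v(j := y)"
  have sumeq: "(\<Sum>l<Suc j. s2 l *\<^sub>R outer (u2 l) (v2 l)) = (\<Sum>l<j. s l *\<^sub>R outer (u l) (v l)) + s' *\<^sub>R outer x y"
  proof -
    have "(\<Sum>l<j. s2 l *\<^sub>R outer (u2 l) (v2 l)) = (\<Sum>l<j. s l *\<^sub>R outer (u l) (v l))"
      by (rule sum.cong) (auto simp: s2_def u2_def v2_def)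
    moreover have "s2 j *\<^sub>R outer (u2 j) (v2 j) = s' *\<^sub>R outer x y"
      by (simp add: s2_def u2_def v2_def)
    ultimately show ?thesis by (simp only: sum.lessThan_Suc)
  qed
  have R2: "G - (\<Sum>l<Suc j. s2 l *\<^sub>R outer (u2 l) (v2 l)) = R - s' *\<^sub>R outer x y"
    unfolding sumeq R_def by (simp add: algebra_simps)
  have o1: "orthon u2 (Suc j)"
    unfolding orthon_def u2_def
  proof (intro allI impI)
    fix i l assume "i < Suc j" "l < Suc j"
    then show "(u(j := x)) i \<bullet> (u(j := x)) l = (if i = l then 1 else 0)"
      using ou st(4) xx unfolding orthon_def
      by (cases "i = j"; cases "l = j") (simp_all add: inner_commute less_Suc_eq)
  qed
  have o2: "orthon v2 (Suc j)"
    unfolding orthon_def v2_def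
  proof (intro allI impI)
    fix i l assume "i < Suc j" "l < Suc j"
    then show "(v(j := y)) i \<bullet> (v(j := y)) l = (if i = l then 1 else 0)"
      using ov st(4) yy unfolding orthon_def
      by (cases "i = j"; cases "l = j") (simp_all add: inner_commute less_Suc_eq)
  qed
  have c1: "\<forall>i<Suc j. (R - s' *\<^sub>R outer x y) *v v2 i = 0"
  proof (intro allI impI)
    fix i assume "i < Suc j"
    then consider "i < j" | "i = j" by linarith
    then show "(R - s' *\<^sub>R outer x y) *v v2 i = 0"
    proof cases
      case 1
      then have "R *v v i = 0" "y \<bullet> v i = 0" using RvR st(4) by auto
      then show ?thesis using \<open>i < j\<close> unfolding v2_def by (simp add: rank1_mv)
    next
      case 2
      then show ?thesis using st(5) yy unfolding v2_def by (simp add: rank1_mv)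
    qed
  qed
  have c2: "\<forall>i<Suc j. \<forall>z. u2 i \<bullet> ((R - s' *\<^sub>R outer x y) *v z) = 0"
  proof (intro allI impI)
    fix i z assume "i < Suc j"
    then consider "i < j" | "i = j" by linarith
    then show "u2 i \<bullet> ((R - s' *\<^sub>R outer x y) *v z) = 0"
    proof cases
      case 1
      then have "u i \<bullet> (R *v z) = 0" "x \<bullet> u i = 0" using RuR st(4) by auto
      then show ?thesis using \<open>i < j\<close> unfolding u2_def by (simp add: rank1_mv inner_diff_right inner_commute)
    next
      case 2
      then show ?thesis using st(6) xx unfolding u2_def by (simp add: rank1_mv inner_diff_right)
    qed
  qed
  have "\<forall>i<Suc j. 0 \<le> s2 i" using s st(1) unfolding s2_def by (auto simp: less_Suc_eq)
  moreover have c1': "\<forall>i<Suc j. (G - (\<Sum>l<Suc j. s2 l *\<^sub>R outer (u2 l) (v2 l))) *v v2 i = 0"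
    unfolding R2 by (rule c1)
  moreover have c2': "\<forall>i<Suc j. \<forall>z. u2 i \<bullet> ((G - (\<Sum>l<Suc j. s2 l *\<^sub>R outer (u2 l) (v2 l))) *v z) = 0"
    unfolding R2 by (rule c2)
  ultimately show ?case
    by (intro exI[of _ s2] exI[of _ u2] exI[of _ v2] conjI o1 o2)
qed


lemma orthon_span:
  fixes w :: "nat \<Rightarrow> real^'k"
  assumes o: "orthon w CARD('k)"
  shows "span (w ` {..<CARD('k)}) = UNIV"
proof -
  let ?B = "w ` {..<CARD('k)}"
  have ww: "w i \<bullet> w i = 1" if "i < CARD('k)" for i using o that unfolding orthon_def by simp
  have wl: "w i \<bullet> w l = 0" if "i < CARD('k)" "l < CARD('k)" "i \<noteq> l" for i l
    using o that unfolding orthon_def by simp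
  have inj: "inj_on w {..<CARD('k)}"
  proof (rule inj_onI)
    fix i l assume il: "i \<in> {..<CARD('k)}" "l \<in> {..<CARD('k)}" "w i = w l"
    show "i = l"
    proof (rule ccontr)
      assume "i \<noteq> l"
      then have "w i \<bullet> w l = 0" using il by (intro wl) auto
      moreover have "w i \<bullet> w l = 1" using ww[of i] il by (metis lessThan_iff)
      ultimately show False by simp
    qed
  qed
  have card: "card ?B = CARD('k)" using card_image[OF inj] by simp
  have po: "pairwise orthogonal ?B"
    unfolding pairwise_def orthogonal_def
  proof (intro ballI impI)
    fix a b assume "a \<in> ?B" "b \<in> ?B" "a \<noteq> b"
    then obtain i l where "i < CARD('k)" "l < CARD('k)" "a = w i" "b = w l" "i \<noteq> l" by auto
    then show "a \<bullet> b = 0" using wl by simp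
  qed
  have "0 \<notin> ?B"
  proof
    assume "0 \<in> ?B"
    then obtain i where "i < CARD('k)" "w i = 0" by auto
    then show False using ww by fastforce
  qed
  then have ind: "independent ?B" using pairwise_orthogonal_independent[OF po] by simp
  have "dim (UNIV :: (real^'k) set) = CARD('k)" by simp
  then have "UNIV \<subseteq> span ?B" using card_eq_dim[of ?B UNIV] ind card by simp
  then show ?thesis by auto
qed

lemma svd_exists:
  fixes G :: "real^'n^'m"
  shows "\<exists>s u v. is_thin_svd G s u v"
proof -
  define d where "d = min CARD('m) CARD('n)"
  obtain s u v where s: "\<forall>i<d. 0 \<le> s i" and ou: "orthon u d" and ov: "orthon v d"
    and Rv: "\<forall>i<d. (G - (\<Sum>l<d. s l *\<^sub>R outer (u l) (v l))) *v v i = 0"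
    and Ru: "\<forall>i<d. \<forall>z. u i \<bullet> ((G - (\<Sum>l<d. s l *\<^sub>R outer (u l) (v l))) *v z) = 0"
    using svd_partial[of d G] unfolding d_def by (auto)
  define R where "R = G - (\<Sum>l<d. s l *\<^sub>R outer (u l) (v l))"
  have R0: "R = 0"
  proof (cases "CARD('n) \<le> CARD('m)")
    case True
    then have dn: "d = CARD('n)" unfolding d_def by simp
    have sp: "span (v ` {..<CARD('n)}) = UNIV" using orthon_span[of v] ov dn by simp
    have "R *v z = 0" for z
    proof (rule linear_eq_0_on_span[of "\<lambda>z. R *v z" "v ` {..<CARD('n)}"])
      show "linear ((*v) R)" by simp
      show "\<And>x. x \<in> v ` {..<CARD('n)} \<Longrightarrow> R *v x = 0" using Rv dn unfolding R_def by auto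
      show "z \<in> span (v ` {..<CARD('n)})" using sp by simp
    qed
    then show ?thesis using matrix_eq[of R 0] by simp
  next
    case False
    then have dm: "d = CARD('m)" unfolding d_def by simp
    have sp: "span (u ` {..<CARD('m)}) = UNIV" using orthon_span[of u] ou dm by simp
    have "R *v z = 0" for z
    proof -
      have "(R *v z) \<bullet> (R *v z) = 0"
      proof (rule linear_eq_0_on_span[of "\<lambda>w. w \<bullet> (R *v z)" "u ` {..<CARD('m)}"])
        show "linear (\<lambda>w. w \<bullet> (R *v z))" using bounded_linear_inner_left bounded_linear.linear by blast
        show "\<And>x. x \<in> u ` {..<CARD('m)} \<Longrightarrow> x \<bullet> (R *v z) = 0" using Ru dm unfolding R_def by auto
        show "R *v z \<in> span (u ` {..<CARD('m)})" using sp by simp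
      qed
      then show ?thesis by simp
    qed
    then show ?thesis using matrix_eq[of R 0] by simp
  qed
  have "G = (\<Sum>l<d. s l *\<^sub>R outer (u l) (v l))" using R0 unfolding R_def by simp
  then have "is_thin_svd G s u v"
    unfolding is_thin_svd_def Let_def d_def[symmetric] using s ou ov unfolding orthon_def by blast
  then show ?thesis by blast
qed

lemma spec_clip_rep:
  fixes G :: "real^'n^'m"
  shows "\<exists>s u v. is_thin_svd G s u v \<and>
     spec_clip \<tau> G = (\<Sum>i<min CARD('m) CARD('n). min (s i) \<tau> *\<^sub>R outer (u i) (v i))"
proof -
  obtain s u v where "is_thin_svd G s u v" using svd_exists by blast
  then have "\<exists>C. \<exists>s u v. is_thin_svd G s u v \<and>
      C = (\<Sum>i<min CARD('m) CARD('n). min (s i) \<tau> *\<^sub>R outer (u i) (v i))" by blast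
  from someI_ex[OF this] show ?thesis unfolding spec_clip_def by blast
qed

lemma gramv:
  fixes u :: "nat \<Rightarrow> 'a::real_inner"
  assumes "orthon u d"
  shows "(\<Sum>i<d. a i *\<^sub>R u i) \<bullet> (\<Sum>l<d. b l *\<^sub>R u l) = (\<Sum>i<d. a i * b i)"
proof -
  have "(\<Sum>i<d. a i *\<^sub>R u i) \<bullet> (\<Sum>l<d. b l *\<^sub>R u l) = (\<Sum>i<d. \<Sum>l<d. a i * (b l * (u i \<bullet> u l)))"
  proof -
    have "\<And>i. (a i *\<^sub>R u i) \<bullet> (\<Sum>l<d. b l *\<^sub>R u l) = (\<Sum>l<d. a i * (b l * (u i \<bullet> u l)))"
      by (simp add: inner_sum_right mult.commute mult.left_commute)
    then show ?thesis by (simp add: inner_sum_left)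
  qed
  also have "\<dots> = (\<Sum>i<d. \<Sum>l<d. if i = l then a i * b i else 0)"
    by (intro sum.cong refl) (use assms in \<open>auto simp: orthon_def\<close>)
  also have "\<dots> = (\<Sum>i<d. a i * b i)" by simp
  finally show ?thesis .
qed

lemma orthon_outer:
  assumes "orthon u d" "orthon v d"
  shows "orthon (\<lambda>i. outer (u i) (v i)) d"
  using assms unfolding orthon_def by (simp add: outer_outer)

lemma orthon_norm: "orthon u d \<Longrightarrow> i < d \<Longrightarrow> norm (u i) = 1"
  unfolding orthon_def by (simp add: norm_eq_1)

lemma bessel:
  fixes u :: "nat \<Rightarrow> 'a::real_inner"
  assumes o: "orthon u d"
  shows "(\<Sum>i<d. (x \<bullet> u i)^2) \<le> (norm x)^2"
proof -
  define y where "y = (\<Sum>i<d. (x \<bullet> u i) *\<^sub>R u i)"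
  have yy: "y \<bullet> y = (\<Sum>i<d. (x \<bullet> u i)^2)" unfolding y_def using gramv[OF o] by (simp add: power2_eq_square)
  have xy: "x \<bullet> y = (\<Sum>i<d. (x \<bullet> u i)^2)" unfolding y_def by (simp add: inner_sum_right power2_eq_square)
  have "0 \<le> norm (x - y)^2" by simp
  also have "\<dots> = (norm x)^2 - 2 * (x \<bullet> y) + (norm y)^2" by (rule nd2)
  also have "\<dots> = (norm x)^2 - (\<Sum>i<d. (x \<bullet> u i)^2)" using xy yy by (simp add: power2_norm_eq_inner)
  finally show ?thesis by simp
qed

definition Kset :: "real \<Rightarrow> (real^'n^'m) set" where
  "Kset \<tau> = {Y. \<forall>x y. norm x = 1 \<longrightarrow> norm y = 1 \<longrightarrow> x \<bullet> (Y *v y) \<le> \<tau>}"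

lemma clip_props:
  fixes G :: "real^'n^'m"
  assumes tau: "0 \<le> \<tau>"
  shows "spec_clip \<tau> G \<in> Kset \<tau>"
    and "\<And>Y. Y \<in> Kset \<tau> \<Longrightarrow> (G - spec_clip \<tau> G) \<bullet> (Y - spec_clip \<tau> G) \<le> 0"
    and "(norm (spec_clip \<tau> G))^2 \<le> real (min CARD('m) CARD('n)) * \<tau>^2"
proof -
  define d where "d = min CARD('m) CARD('n)"
  obtain s u v where svd: "is_thin_svd G s u v" and C: "spec_clip \<tau> G = (\<Sum>i<d. min (s i) \<tau> *\<^sub>R outer (u i) (v i))"
    using spec_clip_rep[of G \<tau>] unfolding d_def by blast
  have s0: "\<forall>i<d. 0 \<le> s i" and ou: "orthon u d" and ov: "orthon v d"
    and G: "G = (\<Sum>i<d. s i *\<^sub>R outer (u i) (v i))"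
    using svd unfolding is_thin_svd_def Let_def d_def[symmetric] orthon_def by auto
  define E where "E = (\<lambda>i. outer (u i) (v i))"
  have oE: "orthon E d" unfolding E_def by (rule orthon_outer[OF ou ov])
  define m where "m = (\<lambda>i. min (s i) \<tau>)"
  define p where "p = (\<lambda>i. s i - m i)"
  have C': "spec_clip \<tau> G = (\<Sum>i<d. m i *\<^sub>R E i)" unfolding C m_def E_def ..
  have G': "G = (\<Sum>i<d. s i *\<^sub>R E i)" unfolding G E_def ..
  have GC: "G - spec_clip \<tau> G = (\<Sum>i<d. p i *\<^sub>R E i)"
    unfolding C' p_def by (subst G') (simp add: sum_subtractf scaleR_diff_left)
  have m0: "\<And>i. i < d \<Longrightarrow> 0 \<le> m i \<and> m i \<le> \<tau>" using s0 tau unfolding m_def by auto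
  have p0: "\<And>i. i < d \<Longrightarrow> 0 \<le> p i" unfolding p_def m_def by auto
  have pm: "\<And>i. p i * m i = p i * \<tau>" unfolding p_def m_def by (auto simp: min_def)
  show "spec_clip \<tau> G \<in> Kset \<tau>"
    unfolding Kset_def
  proof (intro CollectI allI impI)
    fix x :: "real^'m" and y :: "real^'n" assume x: "norm x = 1" and y: "norm y = 1"
    have "x \<bullet> (spec_clip \<tau> G *v y) = outer x y \<bullet> spec_clip \<tau> G" by (simp add: outer_inner)
    also have "\<dots> = (\<Sum>i<d. m i * ((x \<bullet> u i) * (y \<bullet> v i)))"
      unfolding C' E_def by (simp add: inner_sum_right outer_outer)
    also have "\<dots> \<le> (\<Sum>i<d. \<tau> * (((x \<bullet> u i)^2 + (y \<bullet> v i)^2) / 2))"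
    proof (rule sum_mono)
      fix i assume "i \<in> {..<d}"
      then have mi: "0 \<le> m i" "m i \<le> \<tau>" using m0 by auto
      have ab: "(x \<bullet> u i) * (y \<bullet> v i) \<le> ((x \<bullet> u i)^2 + (y \<bullet> v i)^2) / 2"
        using sum_squares_bound[of "x \<bullet> u i" "y \<bullet> v i"] by (simp add: power2_eq_square field_simps)
      have "m i * ((x \<bullet> u i) * (y \<bullet> v i)) \<le> m i * (((x \<bullet> u i)^2 + (y \<bullet> v i)^2) / 2)"
        using mult_left_mono[OF ab mi(1)] .
      also have "\<dots> \<le> \<tau> * (((x \<bullet> u i)^2 + (y \<bullet> v i)^2) / 2)"
        by (rule mult_right_mono[OF mi(2)]) simp
      finally show "m i * ((x \<bullet> u i) * (y \<bullet> v i)) \<le> \<tau> * (((x \<bullet> u i)^2 + (y \<bullet> v i)^2) / 2)" .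
    qed
    also have "\<dots> = (\<Sum>i<d. \<tau> / 2 * (x \<bullet> u i)^2 + \<tau> / 2 * (y \<bullet> v i)^2)"
      by (intro sum.cong refl) (simp add: field_simps)
    also have "\<dots> = \<tau> / 2 * ((\<Sum>i<d. (x \<bullet> u i)^2) + (\<Sum>i<d. (y \<bullet> v i)^2))"
      by (simp add: sum.distrib sum_distrib_left distrib_left)
    also have "\<dots> \<le> \<tau> / 2 * (1 + 1)"
      using bessel[OF ou, of x] bessel[OF ov, of y] x y tau
      by (intro mult_left_mono add_mono) auto
    finally show "x \<bullet> (spec_clip \<tau> G *v y) \<le> \<tau>" by simp
  qed
  show "(G - spec_clip \<tau> G) \<bullet> (Y - spec_clip \<tau> G) \<le> 0" if Y: "Y \<in> Kset \<tau>" for Y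
  proof -
    have "(G - spec_clip \<tau> G) \<bullet> Y = (\<Sum>i<d. p i * (u i \<bullet> (Y *v v i)))"
      unfolding GC E_def by (simp add: inner_sum_left outer_inner)
    also have "\<dots> \<le> (\<Sum>i<d. p i * \<tau>)"
    proof (rule sum_mono)
      fix i assume i: "i \<in> {..<d}"
      have "u i \<bullet> (Y *v v i) \<le> \<tau>" using Y orthon_norm[OF ou] orthon_norm[OF ov] i unfolding Kset_def by auto
      then show "p i * (u i \<bullet> (Y *v v i)) \<le> p i * \<tau>" using p0 i by (auto intro: mult_left_mono)
    qed
    finally have 1: "(G - spec_clip \<tau> G) \<bullet> Y \<le> (\<Sum>i<d. p i * \<tau>)" .
    have "(G - spec_clip \<tau> G) \<bullet> spec_clip \<tau> G = (\<Sum>i<d. p i * m i)"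
      unfolding GC by (subst C') (rule gramv[OF oE])
    also have "\<dots> = (\<Sum>i<d. p i * \<tau>)" by (intro sum.cong refl pm)
    finally show ?thesis using 1 by (simp add: inner_diff_right)
  qed
  have "(norm (spec_clip \<tau> G))^2 = (\<Sum>i<d. m i * m i)"
    unfolding power2_norm_eq_inner C' by (rule gramv[OF oE])
  also have "\<dots> \<le> (\<Sum>i<d. \<tau> * \<tau>)"
    using m0 tau by (intro sum_mono mult_mono) auto
  also have "\<dots> = real d * \<tau>^2" by (simp add: power2_eq_square)
  finally show "(norm (spec_clip \<tau> G))^2 \<le> real (min CARD('m) CARD('n)) * \<tau>^2" unfolding d_def .
qed


context
  fixes \<tau> :: real
  assumes tau0: "0 \<le> \<tau>"
begin

lemma K_fro: "norm (Y::real^'n^'m) \<le> \<tau> \<Longrightarrow> Y \<in> Kset \<tau>"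
  unfolding Kset_def
proof (intro CollectI allI impI)
  fix x :: "real^'m" and y :: "real^'n"
  assume Y: "norm Y \<le> \<tau>" and x: "norm x = 1" and y: "norm y = 1"
  have "x \<bullet> (Y *v y) \<le> norm x * norm (Y *v y)" by (rule norm_cauchy_schwarz)
  also have "\<dots> \<le> norm Y * norm y" using x norm_mv_le[of Y y] by simp
  finally show "x \<bullet> (Y *v y) \<le> \<tau>" using Y y by simp
qed

lemma P_fix: "(Y::real^'n^'m) \<in> Kset \<tau> \<Longrightarrow> spec_clip \<tau> Y = Y"
proof -
  assume Y: "Y \<in> Kset \<tau>"
  have "(Y - spec_clip \<tau> Y) \<bullet> (Y - spec_clip \<tau> Y) \<le> 0" by (rule clip_props(2)[OF tau0 Y])
  then have "(Y - spec_clip \<tau> Y) \<bullet> (Y - spec_clip \<tau> Y) = 0" using inner_ge_zero by (meson antisym)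
  then show ?thesis by simp
qed

lemma P_nonexp: "norm (spec_clip \<tau> A - spec_clip \<tau> B) \<le> norm ((A::real^'n^'m) - B)"
proof -
  let ?a = "spec_clip \<tau> A" and ?b = "spec_clip \<tau> B"
  have 1: "(A - ?a) \<bullet> (?b - ?a) \<le> 0" by (rule clip_props(2)[OF tau0 clip_props(1)[OF tau0]])
  have 2: "(B - ?b) \<bullet> (?a - ?b) \<le> 0" by (rule clip_props(2)[OF tau0 clip_props(1)[OF tau0]])
  have "(norm (?a - ?b))^2 = (?a - ?b) \<bullet> (?a - ?b)" by (simp add: power2_norm_eq_inner)
  also have "\<dots> \<le> (A - B) \<bullet> (?a - ?b)" using 1 2 by (simp add: algebra_simps inner_commute)
  also have "\<dots> \<le> norm (A - B) * norm (?a - ?b)" by (rule norm_cauchy_schwarz)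
  finally have "(norm (?a - ?b))^2 \<le> norm (A - B) * norm (?a - ?b)" .
  then show ?thesis
    by (cases "norm (?a - ?b) = 0") (auto simp: power2_eq_square)
qed

lemma P_zero: "spec_clip \<tau> (0::real^'n^'m) = 0"
  by (rule P_fix) (rule K_fro, simp add: tau0)

lemma P_norm: "norm (spec_clip \<tau> (A::real^'n^'m)) \<le> norm A"
  using P_nonexp[of A 0] by (simp add: P_zero)

lemma P_best: "(Y::real^'n^'m) \<in> Kset \<tau> \<Longrightarrow> norm (A - spec_clip \<tau> A) \<le> norm (A - Y)"
proof -
  assume Y: "Y \<in> Kset \<tau>"
  let ?a = "spec_clip \<tau> A"
  have 1: "(A - ?a) \<bullet> (Y - ?a) \<le> 0" by (rule clip_props(2)[OF tau0 Y])
  have "A - Y = (A - ?a) - (Y - ?a)" by simp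
  then have "(norm (A - Y))^2 = (norm (A - ?a))^2 - 2 * ((A - ?a) \<bullet> (Y - ?a)) + (norm (Y - ?a))^2"
    using nd2 by metis
  moreover have "0 \<le> (norm (Y - ?a))^2" by simp
  ultimately have "(norm (A - ?a))^2 \<le> (norm (A - Y))^2" using 1 by linarith
  then show ?thesis by (rule power2_le_imp_le) simp
qed

lemma P_inner: "(g::real^'n^'m) \<bullet> spec_clip \<tau> g \<ge> norm g * min (norm g) \<tau>"
proof (cases "g = 0")
  case True then show ?thesis by simp
next
  case False
  define r where "r = norm g"
  have r0: "r > 0" using False unfolding r_def by simp
  define c where "c = min 1 (\<tau> / r)"
  have c0: "0 \<le> c" "c \<le> 1" unfolding c_def using r0 tau0 by auto
  have cr: "c * r = min r \<tau>" unfolding c_def using r0 by (auto simp: min_def field_simps)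
  let ?p = "spec_clip \<tau> g"
  have "norm (c *\<^sub>R g) \<le> \<tau>" using cr c0 unfolding r_def by simp
  then have K: "c *\<^sub>R g \<in> Kset \<tau>" by (rule K_fro)
  have "norm (g - ?p) \<le> norm (g - c *\<^sub>R g)" by (rule P_best[OF K])
  also have "g - c *\<^sub>R g = (1 - c) *\<^sub>R g" by (simp add: algebra_simps)
  finally have d1: "norm (g - ?p) \<le> (1 - c) * r" using c0 unfolding r_def by simp
  have "r - norm (g - ?p) \<le> norm ?p" unfolding r_def using norm_triangle_ineq2[of g "g - ?p"] by simp
  moreover have "(1 - c) * r = r - c * r" by (simp add: algebra_simps)
  ultimately have d2: "c * r \<le> norm ?p" using d1 by linarith
  have "(norm (g - ?p))^2 = r^2 - 2 * (g \<bullet> ?p) + (norm ?p)^2" unfolding r_def by (rule nd2)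
  then have "2 * (g \<bullet> ?p) = r^2 + (norm ?p)^2 - (norm (g - ?p))^2" by simp
  also have "\<dots> \<ge> r^2 + (c * r)^2 - ((1 - c) * r)^2"
    using d1 d2 c0 r0 by (intro diff_mono add_left_mono power_mono) auto
  finally have "2 * (g \<bullet> ?p) \<ge> r^2 + (c * r)^2 - ((1 - c) * r)^2" .
  then have "g \<bullet> ?p \<ge> c * r * r" by (simp add: power2_eq_square algebra_simps)
  then show ?thesis using cr unfolding r_def by (simp add: mult.commute)
qed

end


lemma H1:
  fixes t n M \<alpha> :: real
  assumes "0 \<le> t" "t \<le> n" "t \<le> M" "1 < \<alpha>" "\<alpha> \<le> 2"
  shows "t^2 \<le> n powr \<alpha> * M powr (2 - \<alpha>)"
proof (cases "t = 0")
  case True then show ?thesis by simp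
next
  case False
  then have t0: "0 < t" using assms by simp
  have "t^2 = t powr (\<alpha> + (2 - \<alpha>))" using t0 by (simp add: powr_realpow)
  also have "\<dots> = t powr \<alpha> * t powr (2 - \<alpha>)" by (rule powr_add)
  also have "\<dots> \<le> n powr \<alpha> * M powr (2 - \<alpha>)"
    using assms t0 by (intro mult_mono powr_mono2) auto
  finally show ?thesis .
qed

lemma H2:
  fixes n c \<alpha> :: real
  assumes "0 < c" "c < n" "1 \<le> \<alpha>"
  shows "n \<le> n powr \<alpha> * c powr (1 - \<alpha>)"
proof -
  have n0: "0 < n" using assms by simp
  have "n powr \<alpha> * c powr (1 - \<alpha>) = n * (n powr (\<alpha> - 1) / c powr (\<alpha> - 1))"
  proof -
    have "n powr \<alpha> = n powr (1 + (\<alpha> - 1))" by simp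
    also have "\<dots> = n powr 1 * n powr (\<alpha> - 1)" by (rule powr_add)
    finally have "n powr \<alpha> = n powr 1 * n powr (\<alpha> - 1)" .
    moreover have "c powr (1 - \<alpha>) = 1 / c powr (\<alpha> - 1)"
      by (simp add: powr_minus_divide[symmetric])
    ultimately show ?thesis using n0 by simp
  qed
  also have "\<dots> = n * ((n / c) powr (\<alpha> - 1))" using assms n0 by (simp add: powr_divide)
  finally have e: "n powr \<alpha> * c powr (1 - \<alpha>) = n * ((n / c) powr (\<alpha> - 1))" .
  have "1 \<le> (n / c) powr (\<alpha> - 1)" using assms by (intro ge_one_powr_ge_zero) auto
  then have "n * 1 \<le> n * ((n / c) powr (\<alpha> - 1))" using n0 by (intro mult_left_mono) auto
  then show ?thesis using e by simp
qed

lemma H3: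
  fixes n c \<alpha> :: real
  assumes "0 \<le> n" "0 < c" "1 \<le> \<alpha>"
  shows "n \<le> c + n powr \<alpha> * c powr (1 - \<alpha>)"
proof (cases "n \<le> c")
  case True then show ?thesis by (smt (verit) mult_nonneg_nonneg powr_ge_zero)
next
  case False
  then show ?thesis using H2[of c n \<alpha>] assms by simp
qed

lemma H4:
  fixes \<tau> \<sigma> \<alpha> :: real
  assumes "0 < \<tau>" "0 < \<sigma>" "1 \<le> \<alpha>" "\<alpha> \<le> 2"
  shows "((\<tau>/2) powr (1-\<alpha>) * \<sigma> powr \<alpha>)^2 \<le> 4 * (\<tau> powr (-2*(\<alpha>-1)) * \<sigma> powr (2*\<alpha>))"
proof -
  have "((\<tau>/2) powr (1-\<alpha>) * \<sigma> powr \<alpha>)^2 = ((\<tau>/2) powr (1-\<alpha>) * (\<tau>/2) powr (1-\<alpha>)) * (\<sigma> powr \<alpha> * \<sigma> powr \<alpha>)"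
    by (simp add: power2_eq_square mult_ac)
  also have "\<dots> = (\<tau>/2) powr ((1-\<alpha>) + (1-\<alpha>)) * \<sigma> powr (\<alpha> + \<alpha>)"
    by (simp only: powr_add)
  also have "\<dots> = \<tau> powr (-2*(\<alpha>-1)) * 2 powr (2*(\<alpha>-1)) * \<sigma> powr (2*\<alpha>)"
  proof -
    have "(\<tau>/2) powr ((1-\<alpha>) + (1-\<alpha>)) = \<tau> powr (-2*(\<alpha>-1)) / 2 powr (-2*(\<alpha>-1))"
      using assms by (simp add: powr_divide algebra_simps)
    also have "\<dots> = \<tau> powr (-2*(\<alpha>-1)) * 2 powr (2*(\<alpha>-1))"
    proof -
      have "2 powr (2*(\<alpha>-1)) = 2 powr (- (-2*(\<alpha>-1)))" by simp
      also have "\<dots> = 1 / 2 powr (-2*(\<alpha>-1))" by (rule powr_minus_divide)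
      finally show ?thesis by simp
    qed
    finally show ?thesis by (simp add: algebra_simps)
  qed
  also have "\<dots> \<le> \<tau> powr (-2*(\<alpha>-1)) * 4 * \<sigma> powr (2*\<alpha>)"
  proof -
    have "2 powr (2*(\<alpha>-1)) \<le> 2 powr (2::real)" using assms by (intro powr_mono) auto
    then have "2 powr (2*(\<alpha>-1)) \<le> 4" by simp
    then show ?thesis by (intro mult_right_mono mult_left_mono) auto
  qed
  finally show ?thesis by (simp add: algebra_simps)
qed

lemma H5:
  fixes d \<tau> \<alpha> :: real
  assumes "1 \<le> d" "0 < \<tau>" "1 < \<alpha>" "\<alpha> \<le> 2"
  shows "(2 * sqrt d * \<tau>) powr (2-\<alpha>) \<le> 2 * d * \<tau> powr (2-\<alpha>)"
proof -
  have b1: "1 \<le> 2 * sqrt d" using assms real_sqrt_ge_one[of d] by linarith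
  have "(2 * sqrt d * \<tau>) powr (2-\<alpha>) = (2 * sqrt d) powr (2-\<alpha>) * \<tau> powr (2-\<alpha>)"
    using assms by (simp add: powr_mult)
  also have "(2 * sqrt d) powr (2-\<alpha>) \<le> (2 * sqrt d) powr 1"
    using b1 assms by (intro powr_mono) auto
  also have "(2 * sqrt d) powr (1::real) = 2 * sqrt d" using b1 by simp
  also have "sqrt d \<le> d"
  proof -
    have "d * 1 \<le> d * d" using assms by (intro mult_left_mono) auto
    then have "sqrt d \<le> sqrt (d * d)" by (intro real_sqrt_le_mono) simp
    also have "sqrt (d * d) = d" using assms by simp
    finally show ?thesis .
  qed
  finally show ?thesis by (simp add: mult_right_mono)
qed


lemma P_bound:
  fixes A :: "real^'n^'m"
  assumes "0 \<le> \<tau>"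
  shows "norm (spec_clip \<tau> A) \<le> sqrt (real (min CARD('m) CARD('n))) * \<tau>"
proof -
  have "(norm (spec_clip \<tau> A))^2 \<le> real (min CARD('m) CARD('n)) * \<tau>^2" by (rule clip_props(3)[OF assms])
  then have "sqrt ((norm (spec_clip \<tau> A))^2) \<le> sqrt (real (min CARD('m) CARD('n)) * \<tau>^2)"
    by (rule real_sqrt_le_mono)
  then show ?thesis using assms by (simp add: real_sqrt_mult)
qed

lemma pointwise:
  fixes g G :: "real^'n^'m" and \<alpha> \<sigma> \<tau> L \<eta> :: real
  defines "d \<equiv> real (min CARD('m) CARD('n))"
  assumes al: "1 < \<alpha>" "\<alpha> \<le> 2" and sig: "0 < \<sigma>" and tau: "2 \<le> \<tau>" "8 * \<sigma> \<le> \<tau>"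
    and L: "0 < L" and eta: "0 < \<eta>" "4 * d * L * \<eta> \<le> 1"
  shows "g \<bullet> spec_clip \<tau> G - L * \<eta> / 2 * (norm (spec_clip \<tau> G))^2 \<ge>
     phi (norm g) / 4 - 8 * (\<tau> powr (-2*(\<alpha>-1)) * \<sigma> powr (2*\<alpha>)) - 2 * L * \<eta> * d * \<tau> powr (2-\<alpha>) * \<sigma> powr \<alpha>
     + (if norm g \<le> \<tau> / 2 then g \<bullet> (G - g) else 0)
     + ((if norm g \<le> \<tau> / 2 then norm g * (\<tau>/2) powr (1-\<alpha>) else norm g * \<sigma> powr (1-\<alpha>))
          + 2 * L * \<eta> * d * \<tau> powr (2-\<alpha>)) * (\<sigma> powr \<alpha> - norm (G - g) powr \<alpha>)"
proof -
  define r where "r = norm g"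
  define n where "n = norm (G - g)"
  define C where "C = spec_clip \<tau> G"
  define Pg where "Pg = spec_clip \<tau> g"
  define cQ where "cQ = 2 * L * \<eta> * d * \<tau> powr (2-\<alpha>)"
  define T where "T = \<tau> powr (-2*(\<alpha>-1)) * \<sigma> powr (2*\<alpha>)"
  have tau0: "0 \<le> \<tau>" "0 < \<tau>" using tau by auto
  have d1: "1 \<le> d" unfolding d_def by simp
  have r0: "0 \<le> r" and n0: "0 \<le> n" unfolding r_def n_def by auto
  have T0: "0 \<le> T" unfolding T_def by simp
  have cQ0: "0 \<le> cQ" unfolding cQ_def using L eta d1 by simp
  have Le: "L * \<eta> \<le> 1/4"
  proof -
    have "4 * 1 * (L * \<eta>) \<le> 4 * d * (L * \<eta>)" using d1 L eta by (intro mult_right_mono mult_left_mono) auto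
    then show ?thesis using eta by (simp add: mult.assoc)
  qed
  have Le0: "0 \<le> L * \<eta>" using L eta by simp
  have quad: "L * \<eta> / 2 * (norm C)^2 \<le> L * \<eta> * (norm Pg)^2 + cQ * n powr \<alpha>"
  proof -
    define t where "t = norm (C - Pg)"
    have t1: "t \<le> n" unfolding t_def C_def Pg_def n_def by (rule P_nonexp[OF tau0(1)])
    have "t \<le> norm C + norm Pg" unfolding t_def by (rule norm_triangle_ineq4)
    also have "\<dots> \<le> 2 * sqrt d * \<tau>"
      using P_bound[OF tau0(1), of G] P_bound[OF tau0(1), of g] unfolding C_def Pg_def d_def by simp
    finally have t2: "t \<le> 2 * sqrt d * \<tau>" .
    have t0: "0 \<le> t" unfolding t_def by simp
    have "t^2 \<le> n powr \<alpha> * (2 * sqrt d * \<tau>) powr (2 - \<alpha>)" by (rule H1[OF t0 t1 t2 al])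
    also have "\<dots> \<le> n powr \<alpha> * (2 * d * \<tau> powr (2-\<alpha>))"
      by (intro mult_left_mono H5 d1 tau0(2) al) simp
    finally have tt: "t^2 \<le> n powr \<alpha> * (2 * d * \<tau> powr (2-\<alpha>))" .
    have "norm C \<le> norm Pg + t" unfolding t_def using norm_triangle_ineq2[of C Pg] by simp
    then have "(norm C)^2 \<le> (norm Pg + t)^2" by (intro power_mono) auto
    also have "\<dots> \<le> 2 * (norm Pg)^2 + 2 * t^2"
      using sum_squares_bound[of "norm Pg" t] by (simp add: power2_eq_square algebra_simps)
    finally have "(norm C)^2 \<le> 2 * (norm Pg)^2 + 2 * t^2" .
    then have "L * \<eta> / 2 * (norm C)^2 \<le> L * \<eta> / 2 * (2 * (norm Pg)^2 + 2 * t^2)"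
      using Le0 by (intro mult_left_mono) auto
    also have "\<dots> = L * \<eta> * (norm Pg)^2 + L * \<eta> * t^2" by (simp add: algebra_simps)
    also have "L * \<eta> * t^2 \<le> L * \<eta> * (n powr \<alpha> * (2 * d * \<tau> powr (2-\<alpha>)))"
      using tt Le0 by (intro mult_left_mono) auto
    also have "L * \<eta> * (n powr \<alpha> * (2 * d * \<tau> powr (2-\<alpha>))) = cQ * n powr \<alpha>"
      unfolding cQ_def by (simp add: algebra_simps)
    finally show ?thesis by simp
  qed
  show ?thesis
  proof (cases "r \<le> \<tau> / 2")
    case A: True
    have gK: "g \<in> Kset \<tau>" using A tau0 unfolding r_def by (intro K_fro) auto
    have Pgg: "Pg = g" unfolding Pg_def by (rule P_fix[OF tau0(1) gK])
    define e where "e = norm (G - C)"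
    have e1: "e \<le> n" unfolding e_def n_def C_def by (rule P_best[OF tau0(1) gK])
    have e2: "e \<le> n powr \<alpha> * (\<tau>/2) powr (1-\<alpha>)"
    proof (cases "n \<le> \<tau> / 2")
      case True
      have "norm G \<le> norm g + norm (G - g)" using norm_triangle_ineq[of g "G - g"] by simp
      then have "norm G \<le> \<tau>" using A True unfolding r_def n_def by simp
      then have "G \<in> Kset \<tau>" by (rule K_fro[OF tau0(1)])
      then have "C = G" unfolding C_def by (rule P_fix[OF tau0(1)])
      then show ?thesis unfolding e_def by simp
    next
      case False
      then have "n \<le> n powr \<alpha> * (\<tau>/2) powr (1-\<alpha>)" using tau0 al by (intro H2) auto
      then show ?thesis using e1 by simp
    qed
    have gG: "g \<bullet> (G - C) \<le> r * e" unfolding r_def e_def by (rule norm_cauchy_schwarz)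
    have gC: "g \<bullet> C = r^2 + g \<bullet> (G - g) - g \<bullet> (G - C)"
      unfolding r_def by (simp add: inner_diff_right power2_norm_eq_inner)
    define b0 where "b0 = (\<tau>/2) powr (1-\<alpha>)"
    have b00: "0 \<le> b0" unfolding b0_def by simp
    have re: "r * e \<le> r * b0 * n powr \<alpha>" using e2 r0 unfolding b0_def
      by (metis mult.assoc mult.commute mult_left_mono)
    have q2: "L * \<eta> / 2 * (norm C)^2 \<le> L * \<eta> * r^2 + cQ * n powr \<alpha>" using quad Pgg unfolding r_def by simp
    have Lr: "L * \<eta> * r^2 \<le> r^2 / 4" using mult_right_mono[OF Le, of "r^2"] by simp
    define b where "b = b0 * \<sigma> powr \<alpha>"
    have bb: "b^2 \<le> 4 * T" unfolding b_def b0_def T_def using H4[of \<tau> \<sigma> \<alpha>] tau0 sig al by simp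
    have rb: "r * b \<le> r^2 / 2 + b^2 / 2" using sum_squares_bound[of r b] by (simp add: power2_eq_square algebra_simps)
    have ph: "phi r \<le> r^2" unfolding phi_def by simp
    have H: "g \<bullet> C - L * \<eta> / 2 * (norm C)^2 \<ge> r^2 + g \<bullet> (G - g) - r * b0 * n powr \<alpha> - L * \<eta> * r^2 - cQ * n powr \<alpha>"
      using gC gG re q2 by linarith
    have E: "(r * b0 + cQ) * (\<sigma> powr \<alpha> - n powr \<alpha>) = r * b - r * b0 * n powr \<alpha> + cQ * \<sigma> powr \<alpha> - cQ * n powr \<alpha>"
      unfolding b_def by (simp add: algebra_simps)
    have main: "g \<bullet> C - L * \<eta> / 2 * (norm C)^2 \<ge> phi r / 4 - 8 * T - cQ * \<sigma> powr \<alpha> + g \<bullet> (G - g)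
        + (r * b0 + cQ) * (\<sigma> powr \<alpha> - n powr \<alpha>)"
      using H E Lr bb rb ph T0 by linarith
    show ?thesis unfolding r_def[symmetric] n_def[symmetric] C_def[symmetric] cQ_def[symmetric] T_def[symmetric]
      using main A unfolding b0_def by simp
  next
    case B: False
    define m where "m = min r \<tau>"
    have m1: "\<tau> / 2 \<le> m" using B tau0 unfolding m_def by auto
    have gP: "g \<bullet> Pg \<ge> r * m" unfolding Pg_def r_def m_def by (rule P_inner[OF tau0(1)])
    have gCP: "g \<bullet> (C - Pg) \<ge> - (r * n)"
    proof -
      have "\<bar>g \<bullet> (C - Pg)\<bar> \<le> r * norm (C - Pg)" unfolding r_def by (rule Cauchy_Schwarz_ineq2)
      also have "\<dots> \<le> r * n" using r0 P_nonexp[OF tau0(1), of G g] unfolding C_def Pg_def n_def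
        by (intro mult_left_mono) auto
      finally show ?thesis by linarith
    qed
    have gC: "g \<bullet> C = g \<bullet> Pg + g \<bullet> (C - Pg)" by (simp add: inner_diff_right)
    have LP: "L * \<eta> * (norm Pg)^2 \<le> r * m / 4"
    proof (cases "r \<le> \<tau>")
      case True
      then have mr: "m = r" unfolding m_def by simp
      have "norm Pg \<le> r" unfolding Pg_def r_def by (rule P_norm[OF tau0(1)])
      then have "(norm Pg)^2 \<le> r^2" by (intro power_mono) auto
      then have "L * \<eta> * (norm Pg)^2 \<le> 1/4 * r^2" using Le Le0 by (intro mult_mono) auto
      then show ?thesis using mr by (simp add: power2_eq_square)
    next
      case False
      then have mt: "m = \<tau>" unfolding m_def by simp
      have "(norm Pg)^2 \<le> d * \<tau>^2" unfolding Pg_def d_def by (rule clip_props(3)[OF tau0(1)])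
      then have "L * \<eta> * (norm Pg)^2 \<le> L * \<eta> * (d * \<tau>^2)" using Le0 by (intro mult_left_mono) auto
      also have "\<dots> = (L * \<eta> * d) * \<tau>^2" by simp
      also have "\<dots> \<le> 1/4 * \<tau>^2"
        using eta by (intro mult_right_mono) (auto simp: algebra_simps)
      also have "\<dots> \<le> 1/4 * (r * \<tau>)" using False tau0 by (simp add: power2_eq_square)
      finally show ?thesis using mt by simp
    qed
    have nb: "n \<le> \<sigma> + n powr \<alpha> * \<sigma> powr (1-\<alpha>)" using H3[OF n0 sig] al by simp
    have rn: "r * n \<le> r * \<sigma> + r * \<sigma> powr (1-\<alpha>) * n powr \<alpha>"
      using mult_left_mono[OF nb r0] by (simp add: algebra_simps)
    have rs: "r * \<sigma> = r * \<sigma> powr (1-\<alpha>) * \<sigma> powr \<alpha>"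
    proof -
      have "\<sigma> powr (1-\<alpha>) * \<sigma> powr \<alpha> = \<sigma> powr ((1-\<alpha>) + \<alpha>)" by (rule powr_add[symmetric])
      also have "\<dots> = \<sigma>" using sig by simp
      finally show ?thesis by (simp add: mult.assoc)
    qed
    have rm: "r * \<tau> / 2 \<le> r * m" using mult_left_mono[OF m1 r0] by simp
    have rsig: "8 * (r * \<sigma>) \<le> r * \<tau>" using mult_left_mono[OF tau(2) r0] by (simp add: algebra_simps)
    have r2: "2 * r \<le> r * \<tau>" using mult_left_mono[OF tau(1) r0] by (simp add: algebra_simps)
    have r1: "1 \<le> r" using B tau unfolding r_def by simp
    have ph: "phi r \<le> r" unfolding phi_def by simp
    have H: "g \<bullet> C - L * \<eta> / 2 * (norm C)^2 \<ge> r * m - r * n - r * m / 4 - cQ * n powr \<alpha>"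
      using gC gP gCP quad LP by linarith
    have E: "(r * \<sigma> powr (1-\<alpha>) + cQ) * (\<sigma> powr \<alpha> - n powr \<alpha>)
        = r * \<sigma> powr (1-\<alpha>) * \<sigma> powr \<alpha> - r * \<sigma> powr (1-\<alpha>) * n powr \<alpha> + cQ * \<sigma> powr \<alpha> - cQ * n powr \<alpha>"
      by (simp add: algebra_simps)
    have main: "g \<bullet> C - L * \<eta> / 2 * (norm C)^2 \<ge> phi r / 4 - 8 * T - cQ * \<sigma> powr \<alpha>
        + (r * \<sigma> powr (1-\<alpha>) + cQ) * (\<sigma> powr \<alpha> - n powr \<alpha>)"
      using H E rn rs rm rsig r2 r1 ph T0 by linarith
    show ?thesis unfolding r_def[symmetric] n_def[symmetric] C_def[symmetric] cQ_def[symmetric] T_def[symmetric]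
      using main B by simp
  qed
qed


lemma grad_meas:
  fixes f :: "real^'n^'m \<Rightarrow> real" and grad :: "real^'n^'m \<Rightarrow> real^'n^'m"
  assumes gd: "\<And>Y. GDERIV f Y :> grad Y"
  shows "grad \<in> borel_measurable borel"
proof -
  have fd: "(f has_derivative (\<lambda>h. h \<bullet> grad Y)) (at Y)" for Y using gd[of Y] unfolding gderiv_def .
  have cont: "continuous_on UNIV f"
    using has_derivative_continuous[OF fd] by (simp add: continuous_at_imp_continuous_on)
  have comp: "(\<lambda>Y. E \<bullet> grad Y) \<in> borel_measurable borel" for E :: "real^'n^'m"
  proof -
    define q where "q = (\<lambda>k Y. (f (Y + inverse (real (Suc k)) *\<^sub>R E) - f Y) / inverse (real (Suc k)))"
    have "(\<lambda>k. q k Y) \<longlonglongrightarrow> E \<bullet> grad Y" for Y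
    proof -
      have g1: "((\<lambda>t::real. Y + t *\<^sub>R E) has_derivative (\<lambda>t. t *\<^sub>R E)) (at 0)"
        by (auto intro!: derivative_eq_intros)
      have g2: "(f has_derivative (\<lambda>h. h \<bullet> grad Y)) (at ((\<lambda>t::real. Y + t *\<^sub>R E) 0))"
        using fd[of Y] by simp
      have "((\<lambda>t. f (Y + t *\<^sub>R E)) has_derivative (\<lambda>t. (t *\<^sub>R E) \<bullet> grad Y)) (at 0)"
        using has_derivative_compose[OF g1 g2] by simp
      moreover have "(\<lambda>t. (t *\<^sub>R E) \<bullet> grad Y) = (*) (E \<bullet> grad Y)" by (auto simp: mult.commute)
      ultimately have "((\<lambda>t. f (Y + t *\<^sub>R E)) has_field_derivative (E \<bullet> grad Y)) (at 0)"
        unfolding has_field_derivative_def by simp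
      then have lim: "((\<lambda>h. (f (Y + (0 + h) *\<^sub>R E) - f (Y + 0 *\<^sub>R E)) / h) \<longlongrightarrow> E \<bullet> grad Y) (at 0)"
        unfolding DERIV_def by simp
      have seq: "filterlim (\<lambda>k. inverse (real (Suc k))) (at (0::real)) sequentially"
        unfolding filterlim_at using LIMSEQ_inverse_real_of_nat by auto
      have "((\<lambda>k. (f (Y + (0 + inverse (real (Suc k))) *\<^sub>R E) - f (Y + 0 *\<^sub>R E)) / inverse (real (Suc k)))
          \<longlongrightarrow> E \<bullet> grad Y) sequentially"
        by (rule filterlim_compose[OF lim seq])
      then show ?thesis unfolding q_def by simp
    qed
    moreover have "q k \<in> borel_measurable borel" for k
    proof -
      have "continuous_on UNIV (q k)" unfolding q_def
        by (intro continuous_intros continuous_on_compose2[OF cont]) auto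
      then show ?thesis by (rule borel_measurable_continuous_onI)
    qed
    ultimately show ?thesis by (rule borel_measurable_LIMSEQ_real)
  qed
  show ?thesis
    unfolding borel_measurable_euclidean_space[where f = grad]
    using comp by (simp add: inner_commute)
qed


lemma inner_mat: "(Y::real^'n^'m) \<bullet> Z = (\<Sum>i\<in>UNIV. \<Sum>j\<in>UNIV. Y$i$j * Z$i$j)"
  by (simp add: inner_vec_def)

lemma norm_mat_l1: "norm (Y::real^'n^'m) \<le> (\<Sum>i\<in>UNIV. \<Sum>j\<in>UNIV. \<bar>Y$i$j\<bar>)"
proof -
  have "norm Y \<le> (\<Sum>i\<in>UNIV. norm (Y$i))" unfolding norm_vec_def by (rule L2_set_le_sum) simp
  also have "\<dots> \<le> (\<Sum>i\<in>UNIV. \<Sum>j\<in>UNIV. \<bar>Y$i$j\<bar>)" by (intro sum_mono norm_le_l1_cart)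
  finally show ?thesis .
qed

lemma comp_le: "\<bar>(Y::real^'n^'m)$i$j\<bar> \<le> norm Y"
  proof -
  have "\<bar>Y$i$j\<bar> \<le> norm (Y$i)" by (rule component_le_norm_cart)
  also have "norm (Y$i) \<le> norm Y" by (rule Finite_Cartesian_Product.norm_nth_le)
  finally show ?thesis .
qed

lemma nth_meas[measurable]: "(\<lambda>Y::real^'n^'m. Y $ i $ j) \<in> borel_measurable borel"
proof -
  have "bounded_linear (\<lambda>Y::real^'n^'m. Y $ i $ j)"
    using bounded_linear_compose[OF bounded_linear_vec_nth[of j] bounded_linear_vec_nth[of i]] by simp
  then have "continuous_on UNIV (\<lambda>Y::real^'n^'m. Y $ i $ j)" by (rule linear_continuous_on)
  then show ?thesis by (rule borel_measurable_continuous_onI)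
qed

lemma step_bound:
  fixes grad :: "real^'n^'m \<Rightarrow> real^'n^'m" and M :: "'w measure" and Xk Gk :: "'w \<Rightarrow> real^'n^'m"
    and \<alpha> \<sigma> \<tau> L \<eta> :: real
  defines "d \<equiv> real (min CARD('m) CARD('n))"
  assumes prob: "prob_space M"
    and gradm: "grad \<in> borel_measurable borel"
    and Xm: "Xk \<in> borel_measurable M" and Gm: "Gk \<in> borel_measurable M"
    and Cm: "(\<lambda>\<omega>. spec_clip \<tau> (Gk \<omega>)) \<in> borel_measurable M"
    and Gint: "\<And>i j. integrable M (\<lambda>\<omega>. Gk \<omega> $ i $ j)"
    and unb: "\<And>i j. AE \<omega> in M. real_cond_exp M (vimage_algebra (space M) Xk borel) (\<lambda>\<omega>. Gk \<omega> $ i $ j) \<omega>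
          = grad (Xk \<omega>) $ i $ j"
    and mom: "AE \<omega> in M. nn_cond_exp M (vimage_algebra (space M) Xk borel)
          (\<lambda>\<omega>. ennreal (norm (Gk \<omega> - grad (Xk \<omega>)) powr \<alpha>)) \<omega> \<le> ennreal (\<sigma> powr \<alpha>)"
    and al: "1 < \<alpha>" "\<alpha> \<le> 2" and sig: "0 < \<sigma>" and tau: "2 \<le> \<tau>" "8 * \<sigma> \<le> \<tau>"
    and L: "0 < L" and eta: "0 < \<eta>" "4 * d * L * \<eta> \<le> 1"
  shows "integrable M (\<lambda>\<omega>. phi (norm (grad (Xk \<omega>))))"
    and "integrable M (\<lambda>\<omega>. grad (Xk \<omega>) \<bullet> spec_clip \<tau> (Gk \<omega>) - L * \<eta> / 2 * (norm (spec_clip \<tau> (Gk \<omega>)))^2)"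
    and "integral\<^sup>L M (\<lambda>\<omega>. phi (norm (grad (Xk \<omega>)))) / 4
          - (8 * (\<tau> powr (-2*(\<alpha>-1)) * \<sigma> powr (2*\<alpha>)) + 2 * L * \<eta> * d * \<tau> powr (2-\<alpha>) * \<sigma> powr \<alpha>)
        \<le> integral\<^sup>L M (\<lambda>\<omega>. grad (Xk \<omega>) \<bullet> spec_clip \<tau> (Gk \<omega>) - L * \<eta> / 2 * (norm (spec_clip \<tau> (Gk \<omega>)))^2)"
proof -
  interpret P: prob_space M by (rule prob)
  define F where "F = vimage_algebra (space M) Xk borel"
  have subF: "subalgebra M F" unfolding subalgebra_def F_def
    using sets_image_in_sets[of M "space M" Xk borel] Xm by simp
  interpret S: finite_measure_subalgebra M F by unfold_locales (rule subF)
  have XF: "Xk \<in> borel_measurable F" unfolding F_def by (rule measurable_vimage_algebra1) simp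
  define g where "g = (\<lambda>\<omega>. grad (Xk \<omega>))"
  have gF[measurable]: "g \<in> borel_measurable F" unfolding g_def using measurable_compose[OF XF gradm] .
  have gM[measurable]: "g \<in> borel_measurable M" unfolding g_def using measurable_compose[OF Xm gradm] .
  note [measurable] = Gm Cm
  have tau0: "0 < \<tau>" using tau by simp
  have d1: "1 \<le> d" unfolding d_def by simp
  have gij_int: "integrable M (\<lambda>\<omega>. g \<omega> $ i $ j)" for i j
  proof -
    have "integrable M (real_cond_exp M F (\<lambda>\<omega>. Gk \<omega> $ i $ j))" by (rule S.real_cond_exp_int(1)[OF Gint])
    moreover have "AE \<omega> in M. real_cond_exp M F (\<lambda>\<omega>. Gk \<omega> $ i $ j) \<omega> = g \<omega> $ i $ j"
      using unb unfolding F_def g_def .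
    ultimately show ?thesis using integrable_cong_AE[of "real_cond_exp M F (\<lambda>\<omega>. Gk \<omega> $ i $ j)" M "\<lambda>\<omega>. g \<omega> $ i $ j"]
      by simp
  qed
  define r where "r = (\<lambda>\<omega>. norm (g \<omega>))"
  have rM[measurable]: "r \<in> borel_measurable M" unfolding r_def by measurable
  have rF[measurable]: "r \<in> borel_measurable F" unfolding r_def by measurable
  have r0: "0 \<le> r \<omega>" for \<omega> unfolding r_def by simp
  have r_int: "integrable M r"
  proof (rule Bochner_Integration.integrable_bound)
    show "integrable M (\<lambda>\<omega>. \<Sum>i\<in>UNIV. \<Sum>j\<in>UNIV. \<bar>g \<omega> $ i $ j\<bar>)"
      by (intro Bochner_Integration.integrable_sum integrable_abs gij_int)
    show "r \<in> borel_measurable M" by measurable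
    show "AE \<omega> in M. norm (r \<omega>) \<le> norm (\<Sum>i\<in>UNIV. \<Sum>j\<in>UNIV. \<bar>g \<omega> $ i $ j\<bar>)"
    proof (rule AE_I2)
      fix \<omega> assume "\<omega> \<in> space M"
      have "0 \<le> (\<Sum>i\<in>UNIV. \<Sum>j\<in>UNIV. \<bar>g \<omega> $ i $ j\<bar>)" by (intro sum_nonneg) auto
      then show "norm (r \<omega>) \<le> norm (\<Sum>i\<in>UNIV. \<Sum>j\<in>UNIV. \<bar>g \<omega> $ i $ j\<bar>)"
        using norm_mat_l1[of "g \<omega>"] unfolding r_def by simp
    qed
  qed
  define ph where "ph = (\<lambda>\<omega>. phi (r \<omega>))"
  have phM[measurable]: "ph \<in> borel_measurable M" unfolding ph_def phi_def by measurable
  have ph_int: "integrable M ph"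
  proof (rule Bochner_Integration.integrable_bound[OF r_int phM])
    show "AE \<omega> in M. norm (ph \<omega>) \<le> norm (r \<omega>)"
      using r0 by (intro AE_I2) (auto simp: ph_def phi_def min_def)
  qed
  show "integrable M (\<lambda>\<omega>. phi (norm (grad (Xk \<omega>))))" using ph_int unfolding ph_def r_def g_def .
  define C where "C = (\<lambda>\<omega>. spec_clip \<tau> (Gk \<omega>))"
  have CM[measurable]: "C \<in> borel_measurable M" unfolding C_def by measurable
  define h where "h = (\<lambda>\<omega>. g \<omega> \<bullet> C \<omega> - L * \<eta> / 2 * (norm (C \<omega>))^2)"
  have hM[measurable]: "h \<in> borel_measurable M" unfolding h_def by measurable
  have h_int: "integrable M h"
  proof (rule Bochner_Integration.integrable_bound[OF _ hM])
    show "integrable M (\<lambda>\<omega>. r \<omega> * (sqrt d * \<tau>) + L * \<eta> / 2 * (d * \<tau>^2))"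
      using r_int by (intro Bochner_Integration.integrable_add integrable_mult_left) auto
    show "AE \<omega> in M. norm (h \<omega>) \<le> norm (r \<omega> * (sqrt d * \<tau>) + L * \<eta> / 2 * (d * \<tau>^2))"
    proof (rule AE_I2)
      fix \<omega>
      have c1: "norm (C \<omega>) \<le> sqrt d * \<tau>" unfolding C_def d_def using P_bound[where \<tau>=\<tau> and A="Gk \<omega>"] tau0 by simp
      have c2: "(norm (C \<omega>))^2 \<le> d * \<tau>^2" unfolding C_def d_def using clip_props(3)[where \<tau>=\<tau> and G="Gk \<omega>"] tau0 by simp
      have "\<bar>g \<omega> \<bullet> C \<omega>\<bar> \<le> r \<omega> * norm (C \<omega>)" unfolding r_def by (rule Cauchy_Schwarz_ineq2)
      also have "\<dots> \<le> r \<omega> * (sqrt d * \<tau>)" using c1 r0 by (intro mult_left_mono)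
      finally have a1: "\<bar>g \<omega> \<bullet> C \<omega>\<bar> \<le> r \<omega> * (sqrt d * \<tau>)" .
      have a2: "0 \<le> L * \<eta> / 2 * (norm (C \<omega>))^2" using L eta by simp
      have a3: "L * \<eta> / 2 * (norm (C \<omega>))^2 \<le> L * \<eta> / 2 * (d * \<tau>^2)" using c2 L eta by (intro mult_left_mono) auto
      have "0 \<le> r \<omega> * (sqrt d * \<tau>)" using r0 tau0 d1 by simp
      then show "norm (h \<omega>) \<le> norm (r \<omega> * (sqrt d * \<tau>) + L * \<eta> / 2 * (d * \<tau>^2))"
        unfolding h_def using a1 a2 a3 by (simp add: abs_le_iff)
    qed
  qed
  show "integrable M (\<lambda>\<omega>. grad (Xk \<omega>) \<bullet> spec_clip \<tau> (Gk \<omega>) - L * \<eta> / 2 * (norm (spec_clip \<tau> (Gk \<omega>)))^2)"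
    using h_int unfolding h_def C_def g_def .
  define a where "a = (\<lambda>\<omega>. if r \<omega> \<le> \<tau> / 2 then g \<omega> else 0)"
  have aF[measurable]: "a \<in> borel_measurable F" unfolding a_def by measurable
  have aM[measurable]: "a \<in> borel_measurable M" unfolding a_def by measurable
  have a_bnd: "norm (a \<omega>) \<le> \<tau> / 2" for \<omega> unfolding a_def r_def using tau0 by auto
  have aij_bnd: "\<bar>a \<omega> $ i $ j\<bar> \<le> \<tau> / 2" for \<omega> i j using comp_le[of "a \<omega>" i j] a_bnd[of \<omega>] by linarith
  have int_prod: "integrable M (\<lambda>\<omega>. a \<omega> $ i $ j * Z \<omega>)"
    if Zi: "integrable M Z" and Zm: "Z \<in> borel_measurable M" for i j and Z :: "'w \<Rightarrow> real"
  proof (rule Bochner_Integration.integrable_bound)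
    show "integrable M (\<lambda>\<omega>. \<tau> / 2 * \<bar>Z \<omega>\<bar>)" using Zi by (intro integrable_mult_right integrable_abs)
    show "(\<lambda>\<omega>. a \<omega> $ i $ j * Z \<omega>) \<in> borel_measurable M" using Zm by measurable
    show "AE \<omega> in M. norm (a \<omega> $ i $ j * Z \<omega>) \<le> norm (\<tau> / 2 * \<bar>Z \<omega>\<bar>)"
    proof (rule AE_I2)
      fix \<omega>
      have "\<bar>a \<omega> $ i $ j\<bar> * \<bar>Z \<omega>\<bar> \<le> \<tau> / 2 * \<bar>Z \<omega>\<bar>" using aij_bnd by (intro mult_right_mono) auto
      then show "norm (a \<omega> $ i $ j * Z \<omega>) \<le> norm (\<tau> / 2 * \<bar>Z \<omega>\<bar>)" using tau0 by (simp add: abs_mult)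
    qed
  qed
  have GijM[measurable]: "(\<lambda>\<omega>. Gk \<omega> $ i $ j) \<in> borel_measurable M" for i j by measurable
  have gijM[measurable]: "(\<lambda>\<omega>. g \<omega> $ i $ j) \<in> borel_measurable M" for i j by measurable
  have int_aG: "integrable M (\<lambda>\<omega>. a \<omega> $ i $ j * Gk \<omega> $ i $ j)" for i j
    by (rule int_prod[OF Gint GijM])
  have int_ag: "integrable M (\<lambda>\<omega>. a \<omega> $ i $ j * g \<omega> $ i $ j)" for i j
    by (rule int_prod[OF gij_int gijM])
  have e_ij: "integral\<^sup>L M (\<lambda>\<omega>. a \<omega> $ i $ j * Gk \<omega> $ i $ j) = integral\<^sup>L M (\<lambda>\<omega>. a \<omega> $ i $ j * g \<omega> $ i $ j)" for i j
  proof -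
    have aijF: "(\<lambda>\<omega>. a \<omega> $ i $ j) \<in> borel_measurable F" by measurable
    have "integral\<^sup>L M (\<lambda>\<omega>. a \<omega> $ i $ j * real_cond_exp M F (\<lambda>\<omega>. Gk \<omega> $ i $ j) \<omega>)
        = integral\<^sup>L M (\<lambda>\<omega>. a \<omega> $ i $ j * Gk \<omega> $ i $ j)"
      by (rule S.real_cond_exp_intg(2)[OF int_aG aijF GijM])
    moreover have "integral\<^sup>L M (\<lambda>\<omega>. a \<omega> $ i $ j * real_cond_exp M F (\<lambda>\<omega>. Gk \<omega> $ i $ j) \<omega>)
        = integral\<^sup>L M (\<lambda>\<omega>. a \<omega> $ i $ j * g \<omega> $ i $ j)"
    proof (rule integral_cong_AE)
      show "(\<lambda>\<omega>. a \<omega> $ i $ j * real_cond_exp M F (\<lambda>\<omega>. Gk \<omega> $ i $ j) \<omega>) \<in> borel_measurable M" by measurable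
      show "(\<lambda>\<omega>. a \<omega> $ i $ j * g \<omega> $ i $ j) \<in> borel_measurable M" by measurable
      show "AE \<omega> in M. a \<omega> $ i $ j * real_cond_exp M F (\<lambda>\<omega>. Gk \<omega> $ i $ j) \<omega> = a \<omega> $ i $ j * g \<omega> $ i $ j"
        using unb[of i j] unfolding F_def g_def by eventually_elim simp
    qed
    ultimately show ?thesis by simp
  qed
  define xi where "xi = (\<lambda>\<omega>. a \<omega> \<bullet> (Gk \<omega> - g \<omega>))"
  have xi_eq: "xi = (\<lambda>\<omega>. \<Sum>i\<in>UNIV. \<Sum>j\<in>UNIV. a \<omega> $ i $ j * Gk \<omega> $ i $ j - a \<omega> $ i $ j * g \<omega> $ i $ j)"
    unfolding xi_def by (simp add: inner_mat algebra_simps)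
  have xi_int: "integrable M xi" unfolding xi_eq
    by (intro Bochner_Integration.integrable_sum Bochner_Integration.integrable_diff int_aG int_ag)
  have xi0: "integral\<^sup>L M xi = 0"
    unfolding xi_eq
    by (simp add: Bochner_Integration.integral_sum Bochner_Integration.integrable_sum
        Bochner_Integration.integral_diff Bochner_Integration.integrable_diff int_aG int_ag e_ij)
  define cQ where "cQ = 2 * L * \<eta> * d * \<tau> powr (2-\<alpha>)"
  have cQ0: "0 \<le> cQ" unfolding cQ_def using L eta d1 by simp
  define w where "w = (\<lambda>\<omega>. (if r \<omega> \<le> \<tau> / 2 then r \<omega> * (\<tau>/2) powr (1-\<alpha>) else r \<omega> * \<sigma> powr (1-\<alpha>)) + cQ)"
  have wF[measurable]: "w \<in> borel_measurable F" unfolding w_def by measurable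
  have wM[measurable]: "w \<in> borel_measurable M" unfolding w_def by measurable
  have w0: "0 \<le> w \<omega>" for \<omega> unfolding w_def using r0[of \<omega>] cQ0 by auto
  have w_int: "integrable M w"
  proof (rule Bochner_Integration.integrable_bound[OF _ wM])
    show "integrable M (\<lambda>\<omega>. r \<omega> * ((\<tau>/2) powr (1-\<alpha>) + \<sigma> powr (1-\<alpha>)) + cQ)"
      using r_int by (intro Bochner_Integration.integrable_add integrable_mult_left) auto
    show "AE \<omega> in M. norm (w \<omega>) \<le> norm (r \<omega> * ((\<tau>/2) powr (1-\<alpha>) + \<sigma> powr (1-\<alpha>)) + cQ)"
    proof (rule AE_I2)
      fix \<omega>
      have "w \<omega> \<le> r \<omega> * ((\<tau>/2) powr (1-\<alpha>) + \<sigma> powr (1-\<alpha>)) + cQ"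
        unfolding w_def using r0[of \<omega>] by (auto simp: distrib_left)
      moreover have "0 \<le> r \<omega> * ((\<tau>/2) powr (1-\<alpha>) + \<sigma> powr (1-\<alpha>)) + cQ" using r0[of \<omega>] cQ0 by simp
      ultimately show "norm (w \<omega>) \<le> norm (r \<omega> * ((\<tau>/2) powr (1-\<alpha>) + \<sigma> powr (1-\<alpha>)) + cQ)"
        using w0[of \<omega>] by simp
    qed
  qed
  define na where "na = (\<lambda>\<omega>. norm (Gk \<omega> - g \<omega>) powr \<alpha>)"
  have naM[measurable]: "na \<in> borel_measurable M" unfolding na_def by measurable
  have na0: "0 \<le> na \<omega>" for \<omega> unfolding na_def by simp
  have ws_int: "integrable M (\<lambda>\<omega>. w \<omega> * \<sigma> powr \<alpha>)" using w_int by (rule integrable_mult_left)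
  have nn: "(\<integral>\<^sup>+\<omega>. ennreal (w \<omega> * na \<omega>) \<partial>M) \<le> ennreal (integral\<^sup>L M (\<lambda>\<omega>. w \<omega> * \<sigma> powr \<alpha>))"
  proof -
    have "(\<integral>\<^sup>+\<omega>. ennreal (w \<omega> * na \<omega>) \<partial>M) = (\<integral>\<^sup>+\<omega>. ennreal (w \<omega>) * ennreal (na \<omega>) \<partial>M)"
      using w0 na0 by (intro nn_integral_cong) (simp add: ennreal_mult)
    also have "\<dots> = (\<integral>\<^sup>+\<omega>. ennreal (w \<omega>) * nn_cond_exp M F (\<lambda>\<omega>. ennreal (na \<omega>)) \<omega> \<partial>M)"
      by (rule S.nn_cond_exp_intg[symmetric]) measurable
    also have "\<dots> \<le> (\<integral>\<^sup>+\<omega>. ennreal (w \<omega>) * ennreal (\<sigma> powr \<alpha>) \<partial>M)"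
    proof (rule nn_integral_mono_AE)
      show "AE \<omega> in M. ennreal (w \<omega>) * nn_cond_exp M F (\<lambda>\<omega>. ennreal (na \<omega>)) \<omega> \<le> ennreal (w \<omega>) * ennreal (\<sigma> powr \<alpha>)"
        using mom unfolding F_def na_def g_def by eventually_elim (rule mult_left_mono, auto)
    qed
    also have "\<dots> = (\<integral>\<^sup>+\<omega>. ennreal (w \<omega> * \<sigma> powr \<alpha>) \<partial>M)"
      using w0 by (intro nn_integral_cong) (simp add: ennreal_mult)
    also have "\<dots> = ennreal (integral\<^sup>L M (\<lambda>\<omega>. w \<omega> * \<sigma> powr \<alpha>))"
      using w0 by (intro nn_integral_eq_integral ws_int AE_I2) simp
    finally show ?thesis .
  qed
  have wn_int: "integrable M (\<lambda>\<omega>. w \<omega> * na \<omega>)"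
  proof (rule integrableI_nonneg)
    show "(\<lambda>\<omega>. w \<omega> * na \<omega>) \<in> borel_measurable M" by measurable
    show "AE \<omega> in M. 0 \<le> w \<omega> * na \<omega>" using w0 na0 by (intro AE_I2) simp
    show "(\<integral>\<^sup>+\<omega>. ennreal (w \<omega> * na \<omega>) \<partial>M) < \<infinity>" using nn by (simp add: le_less_trans)
  qed
  have wn_le: "integral\<^sup>L M (\<lambda>\<omega>. w \<omega> * na \<omega>) \<le> integral\<^sup>L M (\<lambda>\<omega>. w \<omega> * \<sigma> powr \<alpha>)"
  proof -
    have "ennreal (integral\<^sup>L M (\<lambda>\<omega>. w \<omega> * na \<omega>)) = (\<integral>\<^sup>+\<omega>. ennreal (w \<omega> * na \<omega>) \<partial>M)"
      using w0 na0 by (intro nn_integral_eq_integral[symmetric] wn_int AE_I2) simp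
    with nn have "ennreal (integral\<^sup>L M (\<lambda>\<omega>. w \<omega> * na \<omega>)) \<le> ennreal (integral\<^sup>L M (\<lambda>\<omega>. w \<omega> * \<sigma> powr \<alpha>))"
      by simp
    moreover have "0 \<le> integral\<^sup>L M (\<lambda>\<omega>. w \<omega> * \<sigma> powr \<alpha>)" using w0 by (intro integral_nonneg_AE AE_I2) simp
    ultimately show ?thesis by (simp add: ennreal_le_iff)
  qed
  define B0 where "B0 = 8 * (\<tau> powr (-2*(\<alpha>-1)) * \<sigma> powr (2*\<alpha>)) + 2 * L * \<eta> * d * \<tau> powr (2-\<alpha>) * \<sigma> powr \<alpha>"
  define R where "R = (\<lambda>\<omega>. ((ph \<omega> / 4 - B0 + xi \<omega>) + w \<omega> * \<sigma> powr \<alpha>) - w \<omega> * na \<omega>)"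
  have pw: "R \<omega> \<le> h \<omega>" for \<omega>
  proof -
    have "g \<omega> \<bullet> spec_clip \<tau> (Gk \<omega>) - L * \<eta> / 2 * (norm (spec_clip \<tau> (Gk \<omega>)))^2 \<ge>
       phi (norm (g \<omega>)) / 4 - 8 * (\<tau> powr (-2*(\<alpha>-1)) * \<sigma> powr (2*\<alpha>)) - 2 * L * \<eta> * d * \<tau> powr (2-\<alpha>) * \<sigma> powr \<alpha>
       + (if norm (g \<omega>) \<le> \<tau> / 2 then g \<omega> \<bullet> (Gk \<omega> - g \<omega>) else 0)
       + ((if norm (g \<omega>) \<le> \<tau> / 2 then norm (g \<omega>) * (\<tau>/2) powr (1-\<alpha>) else norm (g \<omega>) * \<sigma> powr (1-\<alpha>))
          + 2 * L * \<eta> * d * \<tau> powr (2-\<alpha>)) * (\<sigma> powr \<alpha> - norm (Gk \<omega> - g \<omega>) powr \<alpha>)"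
      unfolding d_def by (rule pointwise[OF al sig tau L eta(1) eta(2)[unfolded d_def]])
    moreover have "(if norm (g \<omega>) \<le> \<tau> / 2 then g \<omega> \<bullet> (Gk \<omega> - g \<omega>) else 0) = xi \<omega>"
      unfolding xi_def a_def r_def by simp
    ultimately show ?thesis
      unfolding R_def h_def C_def B0_def ph_def w_def na_def cQ_def r_def by (simp add: algebra_simps)
  qed
  have R_int: "integrable M R" unfolding R_def
    using ph_int xi_int ws_int wn_int
    by (intro Bochner_Integration.integrable_diff Bochner_Integration.integrable_add) auto
  have "integral\<^sup>L M R = integral\<^sup>L M ph / 4 - B0 + integral\<^sup>L M xi + integral\<^sup>L M (\<lambda>\<omega>. w \<omega> * \<sigma> powr \<alpha>)
      - integral\<^sup>L M (\<lambda>\<omega>. w \<omega> * na \<omega>)"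
    unfolding R_def using ph_int xi_int ws_int wn_int
    by (simp add: Bochner_Integration.integral_diff Bochner_Integration.integral_add
        Bochner_Integration.integrable_diff Bochner_Integration.integrable_add P.prob_space)
  then have "integral\<^sup>L M ph / 4 - B0 \<le> integral\<^sup>L M R" using xi0 wn_le by simp
  also have "\<dots> \<le> integral\<^sup>L M h" by (rule integral_mono[OF R_int h_int pw])
  finally show "integral\<^sup>L M (\<lambda>\<omega>. phi (norm (grad (Xk \<omega>)))) / 4
          - (8 * (\<tau> powr (-2*(\<alpha>-1)) * \<sigma> powr (2*\<alpha>)) + 2 * L * \<eta> * d * \<tau> powr (2-\<alpha>) * \<sigma> powr \<alpha>)
        \<le> integral\<^sup>L M (\<lambda>\<omega>. grad (Xk \<omega>) \<bullet> spec_clip \<tau> (Gk \<omega>) - L * \<eta> / 2 * (norm (spec_clip \<tau> (Gk \<omega>)))^2)"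
    unfolding ph_def h_def B0_def C_def g_def r_def .
qed


theorem theorem2:
  fixes f :: "real^'n::finite^'m::finite \<Rightarrow> real"
    and grad :: "real^'n^'m \<Rightarrow> real^'n^'m"
    and M :: "'w measure"
    and X G :: "nat \<Rightarrow> 'w \<Rightarrow> real^'n^'m"
    and X0 :: "real^'n^'m"
    and L \<alpha> \<sigma> \<eta> \<tau> :: real and K :: nat
  assumes grad: "\<And>Y. GDERIV f Y :> grad Y"
    and smooth: "\<And>A B. f A \<le> f B + grad B \<bullet> (A - B) + L / 2 * (norm (A - B))\<^sup>2"
    and L_pos: "L > 0"
    and bdd: "bdd_below (range f)"
    and alpha: "1 < \<alpha>" "\<alpha> \<le> 2"
    and sigma: "\<sigma> > 0"
    and prob: "prob_space M"
    and X0: "\<And>\<omega>. \<omega> \<in> space M \<Longrightarrow> X 0 \<omega> = X0"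
    and step: "\<And>k \<omega>. \<omega> \<in> space M \<Longrightarrow> X (Suc k) \<omega> = X k \<omega> - \<eta> *\<^sub>R spec_clip \<tau> (G k \<omega>)"
    and X_meas: "\<And>k. X k \<in> borel_measurable M"
    and G_meas: "\<And>k. G k \<in> borel_measurable M"
    and G_int: "\<And>k i j. integrable M (\<lambda>\<omega>. G k \<omega> $ i $ j)"
    and unbiased: "\<And>k i j. AE \<omega> in M.
        real_cond_exp M (vimage_algebra (space M) (X k) borel) (\<lambda>\<omega>. G k \<omega> $ i $ j) \<omega>
          = grad (X k \<omega>) $ i $ j"
    and moment: "\<And>k. AE \<omega> in M.
        nn_cond_exp M (vimage_algebra (space M) (X k) borel)
          (\<lambda>\<omega>. ennreal (norm (G k \<omega> - grad (X k \<omega>)) powr \<alpha>)) \<omega> \<le> ennreal (\<sigma> powr \<alpha>)"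
    and eta_pos: "\<eta> > 0"
    and eta: "\<eta> \<le> 1 / (4 * real (min CARD('m) CARD('n)) * L)"
    and tau: "\<tau> \<ge> max 2 (8 * \<sigma>)"
    and K: "K \<ge> 1"
  shows "Min ((\<lambda>k. integral\<^sup>L M (\<lambda>\<omega>. phi (norm (grad (X k \<omega>))))) ` {..<K})
      \<le> 4 * (f X0 - Inf (range f)) / (\<eta> * real K)
        + 32 * \<tau> powr (- 2 * (\<alpha> - 1)) * \<sigma> powr (2 * \<alpha>)
        + 8 * \<eta> * real (min CARD('m) CARD('n)) * L * \<tau> powr (2 - \<alpha>) * \<sigma> powr \<alpha>"
proof -
  interpret P: prob_space M by (rule prob)
  define d where "d = real (min CARD('m) CARD('n))"
  define B0 where "B0 = 8 * (\<tau> powr (-2*(\<alpha>-1)) * \<sigma> powr (2*\<alpha>)) + 2 * L * \<eta> * d * \<tau> powr (2-\<alpha>) * \<sigma> powr \<alpha>"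
  define h where "h = (\<lambda>k \<omega>. grad (X k \<omega>) \<bullet> spec_clip \<tau> (G k \<omega>) - L * \<eta> / 2 * (norm (spec_clip \<tau> (G k \<omega>)))^2)"
  define ph where "ph = (\<lambda>k \<omega>. phi (norm (grad (X k \<omega>))))"
  define \<Delta> where "\<Delta> = f X0 - Inf (range f)"
  have tau2: "2 \<le> \<tau>" "8 * \<sigma> \<le> \<tau>" using tau by auto
  have d1: "1 \<le> d" unfolding d_def by simp
  have eta4: "4 * d * L * \<eta> \<le> 1"
  proof -
    have "\<eta> * (4 * d * L) \<le> 1 / (4 * d * L) * (4 * d * L)"
      using eta d1 L_pos unfolding d_def by (intro mult_right_mono) auto
    then show ?thesis using d1 L_pos by (simp add: algebra_simps)
  qed
  have gradm: "grad \<in> borel_measurable borel" by (rule grad_meas[OF grad])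
  have Cm: "(\<lambda>\<omega>. spec_clip \<tau> (G k \<omega>)) \<in> borel_measurable M" for k
  proof -
    have "(\<lambda>\<omega>. (1 / \<eta>) *\<^sub>R (X k \<omega> - X (Suc k) \<omega>)) \<in> borel_measurable M"
      using X_meas by measurable
    moreover have "\<And>\<omega>. \<omega> \<in> space M \<Longrightarrow> (1 / \<eta>) *\<^sub>R (X k \<omega> - X (Suc k) \<omega>) = spec_clip \<tau> (G k \<omega>)"
      using step eta_pos by simp
    ultimately show ?thesis by (subst measurable_cong) auto
  qed
  note SB = step_bound[OF prob gradm X_meas G_meas Cm G_int unbiased moment alpha sigma tau2 L_pos eta_pos eta4[unfolded d_def]]
  have sb1: "integrable M (ph k)" for k using SB(1) unfolding ph_def .
  have sb2: "integrable M (h k)" for k using SB(2) unfolding h_def .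
  have sb3: "integral\<^sup>L M (ph k) / 4 - B0 \<le> integral\<^sup>L M (h k)" for k
    using SB(3) unfolding ph_def h_def B0_def d_def .
  have tel: "\<eta> * (\<Sum>k<K. h k \<omega>) \<le> \<Delta>" if \<omega>: "\<omega> \<in> space M" for \<omega>
  proof -
    have one: "\<eta> * h k \<omega> \<le> f (X k \<omega>) - f (X (Suc k) \<omega>)" for k
    proof -
      have sm: "f (X (Suc k) \<omega>) \<le> f (X k \<omega>) + grad (X k \<omega>) \<bullet> (X (Suc k) \<omega> - X k \<omega>)
          + L / 2 * (norm (X (Suc k) \<omega> - X k \<omega>))\<^sup>2" by (rule smooth)
      have "X (Suc k) \<omega> - X k \<omega> = - (\<eta> *\<^sub>R spec_clip \<tau> (G k \<omega>))" using step[OF \<omega>] by simp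
      then have "f (X (Suc k) \<omega>) \<le> f (X k \<omega>) - \<eta> * (grad (X k \<omega>) \<bullet> spec_clip \<tau> (G k \<omega>))
          + L / 2 * (\<eta>^2 * (norm (spec_clip \<tau> (G k \<omega>)))\<^sup>2)"
        using sm eta_pos by (simp add: power_mult_distrib)
      then show ?thesis unfolding h_def by (simp add: algebra_simps power2_eq_square)
    qed
    have "\<eta> * (\<Sum>k<K. h k \<omega>) = (\<Sum>k<K. \<eta> * h k \<omega>)" by (simp add: sum_distrib_left)
    also have "\<dots> \<le> (\<Sum>k<K. f (X k \<omega>) - f (X (Suc k) \<omega>))" by (intro sum_mono one)
    also have "\<dots> = f (X 0 \<omega>) - f (X K \<omega>)" by (rule sum_lessThan_telescope')
    also have "\<dots> \<le> \<Delta>" unfolding \<Delta>_def using X0[OF \<omega>] cInf_lower[OF _ bdd, of "f (X K \<omega>)"] by simp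
    finally show ?thesis .
  qed
  have hsum_int: "integrable M (\<lambda>\<omega>. \<Sum>k<K. h k \<omega>)" using sb2 by (intro Bochner_Integration.integrable_sum) blast
  have "\<eta> * (\<Sum>k<K. integral\<^sup>L M (h k)) = integral\<^sup>L M (\<lambda>\<omega>. \<eta> * (\<Sum>k<K. h k \<omega>))"
    using sb2 by (simp add: Bochner_Integration.integral_sum sum_distrib_left)
  also have "\<dots> \<le> integral\<^sup>L M (\<lambda>\<omega>. \<Delta>)"
    using hsum_int tel by (intro integral_mono) auto
  also have "\<dots> = \<Delta>" by (simp add: P.prob_space)
  finally have Hs: "\<eta> * (\<Sum>k<K. integral\<^sup>L M (h k)) \<le> \<Delta>" .
  have "(\<Sum>k<K. integral\<^sup>L M (ph k) / 4 - B0) \<le> (\<Sum>k<K. integral\<^sup>L M (h k))" using sb3 by (intro sum_mono) blast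
  then have "(\<Sum>k<K. integral\<^sup>L M (ph k)) / 4 - real K * B0 \<le> (\<Sum>k<K. integral\<^sup>L M (h k))"
    by (simp add: sum_subtractf sum_divide_distrib)
  moreover have "(\<Sum>k<K. integral\<^sup>L M (h k)) \<le> \<Delta> / \<eta>" using Hs eta_pos by (simp add: field_simps)
  ultimately have S: "(\<Sum>k<K. integral\<^sup>L M (ph k)) \<le> 4 * \<Delta> / \<eta> + 4 * real K * B0"
    by linarith
  define mn where "mn = Min ((\<lambda>k. integral\<^sup>L M (ph k)) ` {..<K})"
  have "mn \<le> integral\<^sup>L M (ph k)" if "k < K" for k unfolding mn_def using that by (intro Min_le) auto
  then have "(\<Sum>k<K. mn) \<le> (\<Sum>k<K. integral\<^sup>L M (ph k))" by (intro sum_mono) auto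
  then have "real K * mn \<le> 4 * \<Delta> / \<eta> + 4 * real K * B0" using S by simp
  then have "mn \<le> (4 * \<Delta> / \<eta> + 4 * real K * B0) / real K" using K by (simp add: field_simps)
  also have "\<dots> = 4 * \<Delta> / (\<eta> * real K) + 4 * B0" using K by (simp add: field_simps)
  finally have "mn \<le> 4 * \<Delta> / (\<eta> * real K) + 4 * B0" .
  then show ?thesis unfolding mn_def ph_def \<Delta>_def B0_def d_def by (simp add: algebra_simps)
qed


end
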